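(* Let $G=\langle \mathcal{V},E\rangle$ be a finite undirected graph, let $m\ge 1$ be the number of pursuers, let $f:\mathcal{V}^m\times\mathcal{V}\to\{0,1\}$ be a termination function, and let $\gamma\in(0,1)$. Consider the no-exit pursuit-evasion Markov game on $G$ described in the context, and let $D:\mathcal{V}^m\times\mathcal{V}\to\mathbb{N}\cup\{\infty\}$ and the policies $\mu,\nu$ be the output of the dynamic programming algorithm described in the context. If this game admits a pure-strategy Nash equilibrium, then for every state $s=(s_p,s_e)$ the Nash value satisfies $V^*(s)=\gamma^{D(s_p,s_e)}$, and the joint policy $(\mu,\nu)$ is a Nash equilibrium of the game.
   Context: For a node $v\in\mathcal{V}$, $\mathrm{Neighbor}(v)$ denotes the set of nodes adjacent to $v$ together with $v$ itself. For $s_p=(v^1,\dots,v^m)\in\mathcal{V}^m$, $\mathrm{Neighbor}(s_p)=\mathrm{Neighbor}(v^1)\times\cdots\times\mathrm{Neighbor}(v^m)\subseteq\mathcal{V}^m$. Game: a two-player zero-sum Markov game with state space $S=\mathcal{V}^m\times\mathcal{V}$; a state $s=(s_p,s_e)$ lists the positions $s_p=(v_p^1,\dots,v_p^m)$ of the $m$ pursuers (together the max-player) and the position $s_e=v_e$ of the evader (the min-player). At each step both players move simultaneously: the pursuer team chooses $a\in\mathrm{Neighbor}(s_p)$ and the evader chooses $b\in\mathrm{Neighbor}(s_e)$; the transition is deterministic to the state $(a,b)$. States with $f(s_p,s_e)=1$ are terminal: the game ends there with reward $+1$ to the pursuers; all other rewards are $0$; the discount factor is $\gamma$. Thus the Nash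 value $V^*$ satisfies $V^*(s)=1$ if $f(s)=1$, and otherwise $V^*(s)=\max_{\mu(s)\in\Delta(\mathcal{A})}\min_{b}\sum_a\mu(s,a)\,\gamma V^*(a,b)$. A Nash equilibrium $(\mu^*,\nu^* )$ satisfies $V^{\mu,\nu^*}\le V^{\mu^*,\nu^*}\le V^{\mu^*,\nu}$ at all states for all policies $\mu,\nu$; a pure-strategy Nash equilibrium is one in which both policies are deterministic. We use the convention $\gamma^{\infty}=0$. Algorithm: Initialize an empty FIFO queue $\mathcal{Q}$ and set $D\equiv\infty$. For every $(s_p,s_e)$ with $f(s_p,s_e)=1$, set $D(s_p,s_e)=0$ and push $(s_p,s_e)$ into $\mathcal{Q}$. While $\mathcal{Q}$ is nonempty: pop the first element $(s_p,s_e)$; for each $n_e\in\mathrm{Neighbor}(s_e)$ such that there is no $n_e'\in\mathrm{Neighbor}(n_e)$ with $D(s_p,n_e')>D(s_p,s_e)$, and for each $n_p\in\mathrm{Neighbor}(s_p)$ with $D(n_p,n_e)=\infty$, set $D(n_p,n_e)=D(s_p,s_e)+1$ and push $(n_p,n_e)$ into $\mathcal{Q}$. Finally, for every state $(s_p,s_e)$, define the pursuer policy $\mu(s_p,s_e)\in\arg\min_{n_p\in\mathrm{Neighbor}(s_p)}\max_{n_e\in\mathrm{Neighbor}(s_e)}D(n_p,n_e)$ and the evader policy $\nu(s_p,s_e)\in\arg\max_{n_e\in\mathrm{Neighbor}(s_e)}\min_{n_p\in\mathrm{Neighbor}(s_p)}D(n_p,n_e)$ (both deterministic). *)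

theory Defs
  imports "HOL-Probability.Probability_Mass_Function" "HOL-Library.Extended_Nat"
begin

type_synonym 'v state = "'v list \<times> 'v"

definition Nbr :: "('v \<Rightarrow> 'v \<Rightarrow> bool) \<Rightarrow> 'v \<Rightarrow> 'v set" where
  "Nbr E v = {u. E v u} \<union> {v}"

definition NbrP :: "('v \<Rightarrow> 'v \<Rightarrow> bool) \<Rightarrow> 'v list \<Rightarrow> 'v list set" where
  "NbrP E sp = {a. length a = length sp \<and> (\<forall>i<length sp. a ! i \<in> Nbr E (sp ! i))}"

definition states :: "nat \<Rightarrow> 'v state set" where
  "states m = {s. length (fst s) = m}"

definition valid_ppol :: "('v \<Rightarrow> 'v \<Rightarrow> bool) \<Rightarrow> nat \<Rightarrow> ('v state \<Rightarrow> 'v list pmf) \<Rightarrow> bool" where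
  "valid_ppol E m \<mu> = (\<forall>s\<in>states m. set_pmf (\<mu> s) \<subseteq> NbrP E (fst s))"

definition valid_epol :: "('v \<Rightarrow> 'v \<Rightarrow> bool) \<Rightarrow> nat \<Rightarrow> ('v state \<Rightarrow> 'v pmf) \<Rightarrow> bool" where
  "valid_epol E m \<nu> = (\<forall>s\<in>states m. set_pmf (\<nu> s) \<subseteq> Nbr E (snd s))"

fun val_iter :: "('v list \<Rightarrow> 'v \<Rightarrow> bool) \<Rightarrow> real \<Rightarrow> ('v state \<Rightarrow> 'v list pmf)
    \<Rightarrow> ('v state \<Rightarrow> 'v pmf) \<Rightarrow> nat \<Rightarrow> 'v state \<Rightarrow> real" where
  "val_iter f \<gamma> \<mu> \<nu> 0 s = 0"
| "val_iter f \<gamma> \<mu> \<nu> (Suc n) s =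
     (if f (fst s) (snd s) then 1
      else \<gamma> * measure_pmf.expectation (\<mu> s)
                 (\<lambda>a. measure_pmf.expectation (\<nu> s) (\<lambda>b. val_iter f \<gamma> \<mu> \<nu> n (a, b))))"

definition policy_value :: "('v list \<Rightarrow> 'v \<Rightarrow> bool) \<Rightarrow> real \<Rightarrow> ('v state \<Rightarrow> 'v list pmf)
    \<Rightarrow> ('v state \<Rightarrow> 'v pmf) \<Rightarrow> 'v state \<Rightarrow> real" where
  "policy_value f \<gamma> \<mu> \<nu> s = lim (\<lambda>n. val_iter f \<gamma> \<mu> \<nu> n s)"

definition is_nash_eq :: "('v \<Rightarrow> 'v \<Rightarrow> bool) \<Rightarrow> nat \<Rightarrow> ('v list \<Rightarrow> 'v \<Rightarrow> bool) \<Rightarrow> real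
    \<Rightarrow> ('v state \<Rightarrow> 'v list pmf) \<Rightarrow> ('v state \<Rightarrow> 'v pmf) \<Rightarrow> bool" where
  "is_nash_eq E m f \<gamma> \<mu> \<nu> =
     (valid_ppol E m \<mu> \<and> valid_epol E m \<nu> \<and>
      (\<forall>\<mu>'. valid_ppol E m \<mu>' \<longrightarrow>
         (\<forall>s\<in>states m. policy_value f \<gamma> \<mu>' \<nu> s \<le> policy_value f \<gamma> \<mu> \<nu> s)) \<and>
      (\<forall>\<nu>'. valid_epol E m \<nu>' \<longrightarrow>
         (\<forall>s\<in>states m. policy_value f \<gamma> \<mu> \<nu> s \<le> policy_value f \<gamma> \<mu> \<nu>' s)))"

definition has_pure_nash_eq :: "('v \<Rightarrow> 'v \<Rightarrow> bool) \<Rightarrow> nat \<Rightarrow> ('v list \<Rightarrow> 'v \<Rightarrow> bool) \<Rightarrow> real \<Rightarrow> bool" where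
  "has_pure_nash_eq E m f \<gamma> =
     (\<exists>\<mu> \<nu>. is_nash_eq E m f \<gamma> (\<lambda>s. return_pmf (\<mu> s)) (\<lambda>s. return_pmf (\<nu> s)))"

definition shapley_rhs :: "('v \<Rightarrow> 'v \<Rightarrow> bool) \<Rightarrow> ('v list \<Rightarrow> 'v \<Rightarrow> bool) \<Rightarrow> real
    \<Rightarrow> ('v state \<Rightarrow> real) \<Rightarrow> 'v state \<Rightarrow> real" where
  "shapley_rhs E f \<gamma> V s =
     (if f (fst s) (snd s) then 1
      else Sup ((\<lambda>p. Min ((\<lambda>b. \<gamma> * measure_pmf.expectation p (\<lambda>a. V (a, b))) ` Nbr E (snd s)))
                 ` {p. set_pmf p \<subseteq> NbrP E (fst s)}))"

definition is_nash_value :: "('v \<Rightarrow> 'v \<Rightarrow> bool) \<Rightarrow> nat \<Rightarrow> ('v list \<Rightarrow> 'v \<Rightarrow> bool) \<Rightarrow> real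
    \<Rightarrow> ('v state \<Rightarrow> real) \<Rightarrow> bool" where
  "is_nash_value E m f \<gamma> V =
     ((\<forall>s\<in>states m. V s = shapley_rhs E f \<gamma> V s) \<and> (\<forall>s. s \<notin> states m \<longrightarrow> V s = 0))"

text \<open>The Nash value V* (the unique solution of the minimax equation on the state space).\<close>
definition nash_value :: "('v \<Rightarrow> 'v \<Rightarrow> bool) \<Rightarrow> nat \<Rightarrow> ('v list \<Rightarrow> 'v \<Rightarrow> bool) \<Rightarrow> real
    \<Rightarrow> 'v state \<Rightarrow> real" where
  "nash_value E m f \<gamma> = (THE V. is_nash_value E m f \<gamma> V)"

definition enat_pow :: "real \<Rightarrow> enat \<Rightarrow> real" where
  "enat_pow \<gamma> d = (case d of enat n \<Rightarrow> \<gamma> ^ n | \<infinity> \<Rightarrow> 0)"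

subsection \<open>The dynamic programming (queue) algorithm, as a nondeterministic small-step semantics\<close>

definition proc_np :: "enat \<Rightarrow> 'v \<Rightarrow> 'v list \<Rightarrow> ('v state \<Rightarrow> enat) \<times> 'v state list
    \<Rightarrow> ('v state \<Rightarrow> enat) \<times> 'v state list" where
  "proc_np d ne np DQ = (case DQ of (D, Q) \<Rightarrow>
     if D (np, ne) = \<infinity> then (D((np, ne) := d + 1), Q @ [(np, ne)]) else (D, Q))"

definition proc_ne :: "('v \<Rightarrow> 'v \<Rightarrow> bool) \<Rightarrow> 'v list \<Rightarrow> enat \<Rightarrow> ('v \<Rightarrow> 'v list list) \<Rightarrow> 'v
    \<Rightarrow> ('v state \<Rightarrow> enat) \<times> 'v state list \<Rightarrow> ('v state \<Rightarrow> enat) \<times> 'v state list" where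
  "proc_ne E sp d ordp ne DQ = (case DQ of (D, Q) \<Rightarrow>
     if (\<exists>ne'\<in>Nbr E ne. D (sp, ne') > d) then (D, Q)
     else fold (proc_np d ne) (ordp ne) (D, Q))"

text \<open>One iteration of the while loop: pop the head, then process the neighbours n_e
  (in any order) and for each admissible n_e the pursuer neighbours n_p (in any order).\<close>
inductive alg_step :: "('v \<Rightarrow> 'v \<Rightarrow> bool) \<Rightarrow> ('v state \<Rightarrow> enat) \<times> 'v state list
    \<Rightarrow> ('v state \<Rightarrow> enat) \<times> 'v state list \<Rightarrow> bool" for E where
  "distinct nes \<Longrightarrow> set nes = Nbr E se \<Longrightarrow>
   (\<forall>ne. distinct (ordp ne) \<and> set (ordp ne) = NbrP E sp) \<Longrightarrow>
   alg_step E (D, (sp, se) # Q) (fold (proc_ne E sp (D (sp, se)) ordp) nes (D, Q))"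

definition alg_output :: "('v \<Rightarrow> 'v \<Rightarrow> bool) \<Rightarrow> nat \<Rightarrow> ('v list \<Rightarrow> 'v \<Rightarrow> bool)
    \<Rightarrow> ('v state \<Rightarrow> enat) \<Rightarrow> bool" where
  "alg_output E m f D =
     (\<exists>Q0. distinct Q0 \<and> set Q0 = {s \<in> states m. f (fst s) (snd s)} \<and>
        (alg_step E)\<^sup>*\<^sup>*
          (\<lambda>s. if s \<in> states m \<and> f (fst s) (snd s) then 0 else \<infinity>, Q0) (D, []))"

definition alg_pursuer_policy :: "('v \<Rightarrow> 'v \<Rightarrow> bool) \<Rightarrow> nat \<Rightarrow> ('v state \<Rightarrow> enat)
    \<Rightarrow> ('v state \<Rightarrow> 'v list) \<Rightarrow> bool" where
  "alg_pursuer_policy E m D \<mu> =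
     (\<forall>s\<in>states m. \<mu> s \<in> NbrP E (fst s) \<and>
        (\<forall>np\<in>NbrP E (fst s).
           Max ((\<lambda>ne. D (\<mu> s, ne)) ` Nbr E (snd s)) \<le> Max ((\<lambda>ne. D (np, ne)) ` Nbr E (snd s))))"

definition alg_evader_policy :: "('v \<Rightarrow> 'v \<Rightarrow> bool) \<Rightarrow> nat \<Rightarrow> ('v state \<Rightarrow> enat)
    \<Rightarrow> ('v state \<Rightarrow> 'v) \<Rightarrow> bool" where
  "alg_evader_policy E m D \<nu> =
     (\<forall>s\<in>states m. \<nu> s \<in> Nbr E (snd s) \<and>
        (\<forall>ne\<in>Nbr E (snd s).
           Min ((\<lambda>np. D (np, ne)) ` NbrP E (fst s)) \<le> Min ((\<lambda>np. D (np, \<nu> s)) ` NbrP E (fst s))))"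

end

theory Submission
  imports Defs
begin

lemma pmf_integrable_bdd:
  fixes F :: "'a \<Rightarrow> real"
  assumes "\<forall>x. \<bar>F x\<bar> \<le> B"
  shows "integrable (measure_pmf p) F"
  by (rule measure_pmf.integrable_const_bound[where B=B]) (use assms in auto)

lemma pmf_exp_mono:
  fixes F G :: "'a \<Rightarrow> real"
  assumes "\<forall>x. \<bar>F x\<bar> \<le> B" "\<forall>x. \<bar>G x\<bar> \<le> B" "\<forall>x\<in>set_pmf p. F x \<le> G x"
  shows "measure_pmf.expectation p F \<le> measure_pmf.expectation p G"
  apply (rule integral_mono_AE)
  using pmf_integrable_bdd assms apply blast
  using pmf_integrable_bdd assms apply blast
  using assms(3) by (simp add: AE_measure_pmf_iff)

lemma pmf_exp_le_const:
  fixes F :: "'a \<Rightarrow> real"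
  assumes "\<forall>x. \<bar>F x\<bar> \<le> B" "\<forall>x\<in>set_pmf p. F x \<le> c"
  shows "measure_pmf.expectation p F \<le> c"
proof -
  have "measure_pmf.expectation p F \<le> measure_pmf.expectation p (\<lambda>_. c)"
    by (rule pmf_exp_mono[where B="max B \<bar>c\<bar>"]) (use assms in \<open>auto simp: le_max_iff_disj abs_le_iff\<close>)
  then show ?thesis by simp
qed

lemma pmf_exp_ge_const:
  fixes F :: "'a \<Rightarrow> real"
  assumes "\<forall>x. \<bar>F x\<bar> \<le> B" "\<forall>x\<in>set_pmf p. c \<le> F x"
  shows "c \<le> measure_pmf.expectation p F"
proof -
  have "measure_pmf.expectation p (\<lambda>_. c) \<le> measure_pmf.expectation p F"
    by (rule pmf_exp_mono[where B="max B \<bar>c\<bar>"]) (use assms in \<open>auto simp: le_max_iff_disj abs_le_iff\<close>)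
  then show ?thesis by simp
qed

lemma pmf_exp_abs_bound:
  fixes F :: "'a \<Rightarrow> real"
  assumes "\<forall>x. \<bar>F x\<bar> \<le> B"
  shows "\<bar>measure_pmf.expectation p F\<bar> \<le> B"
proof -
  have "measure_pmf.expectation p F \<le> B" using assms by (intro pmf_exp_le_const[where B=B]) (auto simp: abs_le_iff)
  moreover have "-B \<le> measure_pmf.expectation p F" using assms by (intro pmf_exp_ge_const[where B=B]) (auto, metis abs_le_iff minus_le_iff)
  ultimately show ?thesis by auto
qed

lemma ep_zero[simp]: "enat_pow g 0 = 1"
  by (simp add: enat_pow_def zero_enat_def)

lemma ep_suc: "enat_pow g (k + 1) = g * enat_pow g k"
  by (cases k) (auto simp: enat_pow_def one_enat_def)

lemma ep_nonneg: "0 \<le> g \<Longrightarrow> 0 \<le> enat_pow g k"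
  by (cases k) (auto simp: enat_pow_def)

lemma ep_le1: "0 \<le> g \<Longrightarrow> g \<le> 1 \<Longrightarrow> enat_pow g k \<le> 1"
  by (cases k) (auto simp: enat_pow_def power_le_one)

lemma ep_anti: "0 \<le> g \<Longrightarrow> g \<le> 1 \<Longrightarrow> k \<le> l \<Longrightarrow> enat_pow g l \<le> enat_pow g k"
  by (cases k; cases l) (auto simp: enat_pow_def power_decreasing)

lemma ep_strict: "0 < g \<Longrightarrow> g < 1 \<Longrightarrow> k < l \<Longrightarrow> enat_pow g l < enat_pow g k"
  by (cases k; cases l) (auto simp: enat_pow_def power_strict_decreasing)

lemma val_bounds:
  assumes "0 \<le> g" "g \<le> 1"
  shows "0 \<le> val_iter f g mu nu n s \<and> val_iter f g mu nu n s \<le> 1"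
proof (induction n arbitrary: s)
  case 0 then show ?case by simp
next
  case (Suc n)
  have b: "\<forall>x. \<bar>val_iter f g mu nu n x\<bar> \<le> 1" 
  proof
    fix x show "\<bar>val_iter f g mu nu n x\<bar> \<le> 1" using Suc.IH[of x] by (simp add: abs_le_iff)
  qed
  define F where "F a = measure_pmf.expectation (nu s) (\<lambda>b. val_iter f g mu nu n (a, b))" for a
  have bF: "\<forall>a. \<bar>F a\<bar> \<le> 1" unfolding F_def by (intro allI pmf_exp_abs_bound b[rule_format])
  have "\<forall>a. 0 \<le> F a" unfolding F_def
    by (intro allI pmf_exp_ge_const[where B=1] ballI) (simp_all add: Suc.IH b)
  then have e1: "0 \<le> measure_pmf.expectation (mu s) F"
    by (intro pmf_exp_ge_const[where B=1] bF) simp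
  have "\<forall>a. F a \<le> 1" unfolding F_def
    by (intro allI pmf_exp_le_const[where B=1] ballI) (simp_all add: Suc.IH b)
  then have e2: "measure_pmf.expectation (mu s) F \<le> 1"
    by (intro pmf_exp_le_const[where B=1] bF) simp
  have "0 \<le> g * measure_pmf.expectation (mu s) F" using e1 assms by simp
  moreover have "g * measure_pmf.expectation (mu s) F \<le> 1" using e1 e2 assms by (simp add: mult_le_one)
  ultimately show ?case unfolding F_def by simp
qed

lemma val_abs: "0 \<le> g \<Longrightarrow> g \<le> 1 \<Longrightarrow> \<bar>val_iter f g mu nu n s\<bar> \<le> 1"
  using val_bounds[of g f mu nu n s] by auto

lemma val_mono:
  assumes "0 \<le> g" "g \<le> 1"
  shows "val_iter f g mu nu n s \<le> val_iter f g mu nu (Suc n) s"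
proof (induction n arbitrary: s)
  case 0 then show ?case using val_bounds[OF assms, of f mu nu "Suc 0" s] by simp
next
  case (Suc n)
  define F where "F k a = measure_pmf.expectation (nu s) (\<lambda>b. val_iter f g mu nu k (a, b))" for k a
  have bF: "\<forall>a. \<bar>F k a\<bar> \<le> 1" for k unfolding F_def by (intro allI pmf_exp_abs_bound) (simp add: val_abs[OF assms])
  have "\<forall>a. F n a \<le> F (Suc n) a" unfolding F_def
    by (intro allI ballI pmf_exp_mono[where B=1] val_abs[OF assms] Suc.IH)
  then have "measure_pmf.expectation (mu s) (F n) \<le> measure_pmf.expectation (mu s) (F (Suc n))"
    using bF by (intro pmf_exp_mono[where B=1]) auto
  then show ?case using assms unfolding F_def
    by (simp add: mult_left_mono)
qed

lemma val_lim:
  assumes "0 \<le> g" "g \<le> 1"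
  shows "(\<lambda>n. val_iter f g mu nu n s) \<longlonglongrightarrow> policy_value f g mu nu s"
proof -
  have "incseq (\<lambda>n. val_iter f g mu nu n s)"
    by (intro incseq_SucI) (rule val_mono[OF assms])
  moreover have "Bseq (\<lambda>n. val_iter f g mu nu n s)"
    by (intro BseqI'[where K=1]) (simp add: val_abs[OF assms])
  ultimately have "convergent (\<lambda>n. val_iter f g mu nu n s)"
    using Bseq_monoseq_convergent monoseq_iff by blast
  then show ?thesis unfolding policy_value_def by (simp add: convergent_LIMSEQ_iff)
qed

lemma val_lower_core:
  assumes g: "0 < g" "g < 1"
  and cond: "\<forall>s\<in>S. \<not> f (fst s) (snd s) \<longrightarrow> h s \<noteq> \<infinity> \<longrightarrow>
     (\<forall>a\<in>set_pmf (mu s). \<forall>b\<in>set_pmf (nu s). (a,b) \<in> S \<and> h (a,b) + 1 \<le> h s)"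
  shows "\<forall>s\<in>S. enat_pow g (h s) - g ^ n \<le> val_iter f g mu nu n s"
proof (induction n)
  case 0
  show ?case using ep_le1[of g] g by simp
next
  case (Suc n)
  show ?case
  proof
    fix s assume sS: "s \<in> S"
    show "enat_pow g (h s) - g ^ Suc n \<le> val_iter f g mu nu (Suc n) s"
    proof (cases "f (fst s) (snd s)")
      case True
      have "0 \<le> g ^ Suc n" using g by simp
      moreover have "val_iter f g mu nu (Suc n) s = 1" using True by simp
      ultimately show ?thesis using ep_le1[of g "h s"] g by linarith
    next
      case nT: False
      show ?thesis
      proof (cases "h s = \<infinity>")
        case True
        have "0 \<le> val_iter f g mu nu (Suc n) s"
          using val_bounds[of g f mu nu "Suc n" s] g by (meson conjunct1 less_imp_le)
        moreover have "enat_pow g (h s) = 0" using True by (simp add: enat_pow_def)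
        moreover have "0 \<le> g ^ Suc n" using g by (simp del: power_Suc)
        ultimately show ?thesis by linarith
      next
        case False
        define L where "L = (enat_pow g (h s) - g ^ Suc n) / g"
        have key: "L \<le> val_iter f g mu nu n (a, b)" if "a \<in> set_pmf (mu s)" "b \<in> set_pmf (nu s)" for a b
        proof -
          have ab: "(a,b) \<in> S" "h (a,b) + 1 \<le> h s" using cond sS nT False that by auto
          have "enat_pow g (h s) \<le> enat_pow g (h (a,b) + 1)" using ep_anti[OF _ _ ab(2), of g] g by simp
          also have "\<dots> = g * enat_pow g (h (a,b))" by (rule ep_suc)
          finally have 1: "enat_pow g (h s) \<le> g * enat_pow g (h (a,b))" .
          have 2: "enat_pow g (h (a,b)) - g ^ n \<le> val_iter f g mu nu n (a, b)" using Suc ab by blast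
          have "L = enat_pow g (h s) / g - g ^ n" unfolding L_def using g by (simp add: field_simps)
          also have "\<dots> \<le> enat_pow g (h (a,b)) - g ^ n" using 1 g by (simp add: divide_le_eq mult.commute)
          finally show ?thesis using 2 by linarith
        qed
        define F where "F a = measure_pmf.expectation (nu s) (\<lambda>b. val_iter f g mu nu n (a, b))" for a
        have bF: "\<forall>a. \<bar>F a\<bar> \<le> 1" unfolding F_def using g
          by (intro allI pmf_exp_abs_bound) (simp add: val_abs)
        have "\<forall>a\<in>set_pmf (mu s). L \<le> F a" unfolding F_def using g key
          by (intro ballI pmf_exp_ge_const[where B=1]) (simp_all add: val_abs)
        then have "L \<le> measure_pmf.expectation (mu s) F"
          by (intro pmf_exp_ge_const[where B=1] bF) simp
        then have "g * L \<le> g * measure_pmf.expectation (mu s) F" using g by simp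
        moreover have "g * L = enat_pow g (h s) - g ^ Suc n" unfolding L_def using g by simp
        ultimately show ?thesis using nT unfolding F_def by simp
      qed
    qed
  qed
qed

lemma val_lower:
  assumes g: "0 < g" "g < 1"
  and cond: "\<forall>s\<in>S. \<not> f (fst s) (snd s) \<longrightarrow> h s \<noteq> \<infinity> \<longrightarrow>
     (\<forall>a\<in>set_pmf (mu s). \<forall>b\<in>set_pmf (nu s). (a,b) \<in> S \<and> h (a,b) + 1 \<le> h s)"
  and sS: "s \<in> S"
  shows "enat_pow g (h s) \<le> policy_value f g mu nu s"
proof -
  have "(\<lambda>n. enat_pow g (h s) - g ^ n) \<longlonglongrightarrow> enat_pow g (h s) - 0"
    using g by (intro tendsto_diff tendsto_const LIMSEQ_power_zero) auto
  moreover have "(\<lambda>n. val_iter f g mu nu n s) \<longlonglongrightarrow> policy_value f g mu nu s"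
    using g by (intro val_lim) auto
  moreover have "\<forall>n. enat_pow g (h s) - g ^ n \<le> val_iter f g mu nu n s"
    using val_lower_core[OF g cond] sS by blast
  ultimately show ?thesis by (intro LIMSEQ_le) auto
qed

lemma val_upper_core:
  assumes g: "0 < g" "g < 1"
  and cond: "\<forall>s\<in>S. (f (fst s) (snd s) \<longrightarrow> h s = 0) \<and> (\<not> f (fst s) (snd s) \<longrightarrow>
     (\<forall>a\<in>set_pmf (mu s). \<forall>b\<in>set_pmf (nu s). (a,b) \<in> S \<and> h s \<le> h (a,b) + 1))"
  shows "\<forall>s\<in>S. val_iter f g mu nu n s \<le> enat_pow g (h s) + g ^ n"
proof (induction n)
  case 0
  show ?case using ep_nonneg[of g] g by simp
next
  case (Suc n)
  show ?case
  proof
    fix s assume sS: "s \<in> S"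
    show "val_iter f g mu nu (Suc n) s \<le> enat_pow g (h s) + g ^ Suc n"
    proof (cases "f (fst s) (snd s)")
      case True
      then show ?thesis using cond sS g by simp
    next
      case nT: False
      define U where "U = (enat_pow g (h s) + g ^ Suc n) / g"
      have key: "val_iter f g mu nu n (a, b) \<le> U" if "a \<in> set_pmf (mu s)" "b \<in> set_pmf (nu s)" for a b
      proof -
        have ab: "(a,b) \<in> S" "h s \<le> h (a,b) + 1" using cond sS nT that by auto
        have "g * enat_pow g (h (a,b)) = enat_pow g (h (a,b) + 1)" by (rule ep_suc[symmetric])
        also have "\<dots> \<le> enat_pow g (h s)" using ep_anti[OF _ _ ab(2), of g] g by simp
        finally have 1: "g * enat_pow g (h (a,b)) \<le> enat_pow g (h s)" .
        have 2: "val_iter f g mu nu n (a, b) \<le> enat_pow g (h (a,b)) + g ^ n" using Suc ab by blast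
        have "U = enat_pow g (h s) / g + g ^ n" unfolding U_def using g by (simp add: field_simps)
        moreover have "enat_pow g (h (a,b)) \<le> enat_pow g (h s) / g" using 1 g by (simp add: le_divide_eq mult.commute)
        ultimately show ?thesis using 2 by linarith
      qed
      define F where "F a = measure_pmf.expectation (nu s) (\<lambda>b. val_iter f g mu nu n (a, b))" for a
      have bF: "\<forall>a. \<bar>F a\<bar> \<le> 1" unfolding F_def using g
        by (intro allI pmf_exp_abs_bound) (simp add: val_abs)
      have "\<forall>a\<in>set_pmf (mu s). F a \<le> U" unfolding F_def using g key
        by (intro ballI pmf_exp_le_const[where B=1]) (simp_all add: val_abs)
      then have "measure_pmf.expectation (mu s) F \<le> U"
        by (intro pmf_exp_le_const[where B=1] bF) simp
      then have "g * measure_pmf.expectation (mu s) F \<le> g * U" using g by simp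
      moreover have "g * U = enat_pow g (h s) + g ^ Suc n" unfolding U_def using g by simp
      ultimately show ?thesis using nT unfolding F_def by simp
    qed
  qed
qed

lemma val_upper:
  assumes g: "0 < g" "g < 1"
  and cond: "\<forall>s\<in>S. (f (fst s) (snd s) \<longrightarrow> h s = 0) \<and> (\<not> f (fst s) (snd s) \<longrightarrow>
     (\<forall>a\<in>set_pmf (mu s). \<forall>b\<in>set_pmf (nu s). (a,b) \<in> S \<and> h s \<le> h (a,b) + 1))"
  and sS: "s \<in> S"
  shows "policy_value f g mu nu s \<le> enat_pow g (h s)"
proof -
  have "(\<lambda>n. enat_pow g (h s) + g ^ n) \<longlonglongrightarrow> enat_pow g (h s) + 0"
    using g by (intro tendsto_add tendsto_const LIMSEQ_power_zero) auto
  moreover have "(\<lambda>n. val_iter f g mu nu n s) \<longlonglongrightarrow> policy_value f g mu nu s"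
    using g by (intro val_lim) auto
  moreover have "\<forall>n. val_iter f g mu nu n s \<le> enat_pow g (h s) + g ^ n"
    using val_upper_core[OF g cond] sS by blast
  ultimately show ?thesis by (intro LIMSEQ_le) auto
qed

lemma Nbr_self: "v \<in> Nbr E v" by (simp add: Nbr_def)

lemma Nbr_sym: "\<forall>u v. E u v \<longrightarrow> E v u \<Longrightarrow> u \<in> Nbr E v \<Longrightarrow> v \<in> Nbr E u"
  by (auto simp: Nbr_def)

lemma NbrP_len: "a \<in> NbrP E b \<Longrightarrow> length a = length b"
  by (simp add: NbrP_def)

lemma NbrP_sym: "\<forall>u v. E u v \<longrightarrow> E v u \<Longrightarrow> a \<in> NbrP E b \<Longrightarrow> b \<in> NbrP E a"
proof -
  assume u: "\<forall>u v. E u v \<longrightarrow> E v u" and a: "a \<in> NbrP E b"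
  have l: "length a = length b" and n: "\<forall>i<length b. a ! i \<in> Nbr E (b ! i)"
    using a unfolding NbrP_def by auto
  have "\<forall>i<length a. b ! i \<in> Nbr E (a ! i)"
  proof (intro allI impI)
    fix i assume "i < length a"
    then have "a ! i \<in> Nbr E (b ! i)" using n l by simp
    then show "b ! i \<in> Nbr E (a ! i)" using Nbr_sym[OF u] by blast
  qed
  then show ?thesis using l unfolding NbrP_def by simp
qed

lemma NbrP_self: "b \<in> NbrP E b"
  by (simp add: NbrP_def Nbr_self)

definition Good :: "('v \<Rightarrow> 'v \<Rightarrow> bool) \<Rightarrow> 'v list \<Rightarrow> enat \<Rightarrow> ('v state \<Rightarrow> enat) \<Rightarrow> 'v state \<Rightarrow> bool" where
  "Good E sp d D s = (fst s \<in> NbrP E sp \<and> (\<forall>ne'\<in>Nbr E (snd s). D (sp, ne') \<le> d))"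

definition extG :: "('v \<Rightarrow> 'v \<Rightarrow> bool) \<Rightarrow> 'v list \<Rightarrow> enat \<Rightarrow> ('v state \<Rightarrow> enat) \<Rightarrow> 'v state list
   \<Rightarrow> ('v state \<Rightarrow> enat) \<Rightarrow> 'v state list \<Rightarrow> bool" where
  "extG E sp d D Q D' Q' = (\<exists>R. Q' = Q @ R \<and>
     (\<forall>s\<in>set R. D s = \<infinity> \<and> D' s = d + 1 \<and> Good E sp d D' s) \<and>
     (\<forall>s. s \<notin> set R \<longrightarrow> D' s = D s))"

lemma extG_refl: "extG E sp d D Q D Q"
  unfolding extG_def by (intro exI[of _ "[]"]) simp

lemma extG_fin: "extG E sp d D Q D' Q' \<Longrightarrow> D s \<noteq> \<infinity> \<Longrightarrow> D' s = D s"
proof -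
  assume "extG E sp d D Q D' Q'" "D s \<noteq> \<infinity>"
  then obtain R where "\<forall>s\<in>set R. D s = \<infinity>" "\<forall>s. s \<notin> set R \<longrightarrow> D' s = D s"
    unfolding extG_def by blast
  moreover have "s \<notin> set R" using \<open>D s \<noteq> \<infinity>\<close> calculation(1) by metis
  ultimately show "D' s = D s" by metis
qed

lemma le_fin: "x \<le> d \<Longrightarrow> d \<noteq> \<infinity> \<Longrightarrow> x \<noteq> (\<infinity>::enat)"
proof
  assume "x \<le> d" "d \<noteq> \<infinity>" "x = \<infinity>"
  then show False by simp
qed

lemma dsuc_not_le: "d \<noteq> \<infinity> \<Longrightarrow> \<not> (d + 1 \<le> (d::enat))"
  by (cases d) (auto simp: one_enat_def)

lemma dsuc_fin: "d \<noteq> \<infinity> \<Longrightarrow> d + 1 \<noteq> (\<infinity>::enat)"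
  by (cases d) (auto simp: one_enat_def)

lemma extG_back: "d \<noteq> \<infinity> \<Longrightarrow> extG E sp d D Q D' Q' \<Longrightarrow> D' s \<le> d \<Longrightarrow> D s = D' s"
  unfolding extG_def using dsuc_not_le by metis

lemma Good_stable: "d \<noteq> \<infinity> \<Longrightarrow> extG E sp d D1 Q1 D2 Q2 \<Longrightarrow> Good E sp d D1 s \<Longrightarrow> Good E sp d D2 s"
  unfolding Good_def using extG_fin le_fin by metis

lemma extG_trans:
  assumes d: "d \<noteq> \<infinity>" and 1: "extG E sp d D Q D1 Q1" and 2: "extG E sp d D1 Q1 D2 Q2"
  shows "extG E sp d D Q D2 Q2"
proof -
  obtain R1 where R1: "Q1 = Q @ R1" "\<forall>s\<in>set R1. D s = \<infinity> \<and> D1 s = d + 1 \<and> Good E sp d D1 s"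
      "\<forall>s. s \<notin> set R1 \<longrightarrow> D1 s = D s" using 1 unfolding extG_def by blast
  obtain R2 where R2: "Q2 = Q1 @ R2" "\<forall>s\<in>set R2. D1 s = \<infinity> \<and> D2 s = d + 1 \<and> Good E sp d D2 s"
      "\<forall>s. s \<notin> set R2 \<longrightarrow> D2 s = D1 s" using 2 unfolding extG_def by blast
  have fin: "d + 1 \<noteq> \<infinity>" using dsuc_fin[OF d] .
  have A: "D s = \<infinity> \<and> D2 s = d + 1 \<and> Good E sp d D2 s" if sin: "s \<in> set (R1 @ R2)" for s
  proof -
    consider "s \<in> set R1" | "s \<in> set R2" using sin by auto
    then show ?thesis
    proof cases
      case 1
      note s1 = this
      then have "s \<notin> set R2" using R1 R2 fin by auto
      then have "D2 s = D1 s" using R2(3) by metis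
      then show ?thesis using s1 R1 R2 Good_stable[OF d 2] by auto
    next
      case 2
      note s2 = this
      then have "s \<notin> set R1" using R1 R2 fin by auto
      then have "D1 s = D s" using R1(3) by metis
      then show ?thesis using s2 R1 R2 by auto
    qed
  qed
  have B: "D2 s = D s" if "s \<notin> set (R1 @ R2)" for s
    using that R1(3) R2(3) by (metis Un_iff set_append)
  show ?thesis unfolding extG_def
    by (intro exI[of _ "R1 @ R2"] conjI ballI allI impI A B) (use R1 R2 in simp_all)
qed

lemma proc_np_ok:
  assumes d: "d \<noteq> \<infinity>" and np: "np \<in> NbrP E sp" and c: "\<forall>ne'\<in>Nbr E ne. D (sp, ne') \<le> d"
  shows "extG E sp d D Q (fst (proc_np d ne np (D, Q))) (snd (proc_np d ne np (D, Q)))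
         \<and> fst (proc_np d ne np (D, Q)) (np, ne) \<noteq> \<infinity>"
proof (cases "D (np, ne) = \<infinity>")
  case True
  have "Good E sp d (D((np, ne) := d + 1)) (np, ne)"
    unfolding Good_def using np c True d by (auto simp: enat_ord_simps)
  then show ?thesis using True dsuc_fin[OF d] unfolding proc_np_def extG_def
    by (intro conjI exI[of _ "[(np,ne)]"]) auto
next
  case False
  then have "proc_np d ne np (D, Q) = (D, Q)" unfolding proc_np_def by (simp only: False if_False prod.case)
  then show ?thesis using extG_refl False by simp
qed

lemma fold_np_ok:
  assumes d: "d \<noteq> \<infinity>"
  shows "set nps \<subseteq> NbrP E sp \<Longrightarrow> (\<forall>ne'\<in>Nbr E ne. D (sp, ne') \<le> d) \<Longrightarrow>
    extG E sp d D Q (fst (fold (proc_np d ne) nps (D, Q))) (snd (fold (proc_np d ne) nps (D, Q)))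
    \<and> (\<forall>np\<in>set nps. fst (fold (proc_np d ne) nps (D, Q)) (np, ne) \<noteq> \<infinity>)"
proof (induction nps arbitrary: D Q)
  case Nil
  then show ?case using extG_refl by simp
next
  case (Cons x xs)
  obtain D1 Q1 where p1: "proc_np d ne x (D, Q) = (D1, Q1)" by (cases "proc_np d ne x (D, Q)")
  have s1: "extG E sp d D Q D1 Q1" "D1 (x, ne) \<noteq> \<infinity>"
    using proc_np_ok[OF d, of x E sp ne D Q] Cons.prems p1 by auto
  have c1: "\<forall>ne'\<in>Nbr E ne. D1 (sp, ne') \<le> d"
    using Cons.prems(2) extG_fin[OF s1(1)] le_fin d by metis
  have IH: "extG E sp d D1 Q1 (fst (fold (proc_np d ne) xs (D1, Q1))) (snd (fold (proc_np d ne) xs (D1, Q1)))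
    \<and> (\<forall>np\<in>set xs. fst (fold (proc_np d ne) xs (D1, Q1)) (np, ne) \<noteq> \<infinity>)"
    using Cons.IH[OF _ c1] Cons.prems(1) by simp
  have "fst (fold (proc_np d ne) xs (D1, Q1)) (x, ne) \<noteq> \<infinity>"
    using extG_fin IH s1(2) by metis
  then show ?case using IH extG_trans[OF d s1(1)] p1 by auto
qed

lemma proc_ne_ok:
  assumes d: "d \<noteq> \<infinity>" and ord: "set (ordp ne) = NbrP E sp"
  shows "extG E sp d D Q (fst (proc_ne E sp d ordp ne (D, Q))) (snd (proc_ne E sp d ordp ne (D, Q)))
    \<and> ((\<forall>ne'\<in>Nbr E ne. D (sp, ne') \<le> d) \<longrightarrow>
        (\<forall>np\<in>NbrP E sp. fst (proc_ne E sp d ordp ne (D, Q)) (np, ne) \<noteq> \<infinity>))"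
proof (cases "\<exists>ne'\<in>Nbr E ne. D (sp, ne') > d")
  case True
  then show ?thesis unfolding proc_ne_def using extG_refl by (auto simp: not_le)
next
  case False
  then have c: "\<forall>ne'\<in>Nbr E ne. D (sp, ne') \<le> d" by (auto simp: not_less)
  show ?thesis unfolding proc_ne_def using False fold_np_ok[OF d _ c, of "ordp ne" Q] ord by auto
qed

lemma fold_ne_ok:
  assumes d: "d \<noteq> \<infinity>" and ord: "\<forall>ne. set (ordp ne) = NbrP E sp"
  shows "extG E sp d D Q (fst (fold (proc_ne E sp d ordp) nes (D, Q))) (snd (fold (proc_ne E sp d ordp) nes (D, Q)))
    \<and> (\<forall>ne\<in>set nes. (\<forall>ne'\<in>Nbr E ne. fst (fold (proc_ne E sp d ordp) nes (D, Q)) (sp, ne') \<le> d) \<longrightarrow>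
        (\<forall>np\<in>NbrP E sp. fst (fold (proc_ne E sp d ordp) nes (D, Q)) (np, ne) \<noteq> \<infinity>))"
proof (induction nes arbitrary: D Q)
  case Nil
  then show ?case using extG_refl by simp
next
  case (Cons x xs)
  obtain D1 Q1 where p1: "proc_ne E sp d ordp x (D, Q) = (D1, Q1)" by (cases "proc_ne E sp d ordp x (D, Q)")
  have s1: "extG E sp d D Q D1 Q1"
    "(\<forall>ne'\<in>Nbr E x. D (sp, ne') \<le> d) \<longrightarrow> (\<forall>np\<in>NbrP E sp. D1 (np, x) \<noteq> \<infinity>)"
    using proc_ne_ok[OF d, of ordp x E sp D Q] ord p1 by auto
  define DF where "DF = fst (fold (proc_ne E sp d ordp) xs (D1, Q1))"
  define QF where "QF = snd (fold (proc_ne E sp d ordp) xs (D1, Q1))"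
  have IH: "extG E sp d D1 Q1 DF QF"
    "\<forall>ne\<in>set xs. (\<forall>ne'\<in>Nbr E ne. DF (sp, ne') \<le> d) \<longrightarrow> (\<forall>np\<in>NbrP E sp. DF (np, ne) \<noteq> \<infinity>)"
    using Cons.IH[of D1 Q1] unfolding DF_def QF_def by auto
  have tr: "extG E sp d D Q DF QF" using extG_trans[OF d s1(1) IH(1)] .
  have "(\<forall>ne'\<in>Nbr E x. DF (sp, ne') \<le> d) \<longrightarrow> (\<forall>np\<in>NbrP E sp. DF (np, x) \<noteq> \<infinity>)"
  proof (intro impI ballI)
    fix np assume c: "\<forall>ne'\<in>Nbr E x. DF (sp, ne') \<le> d" and np: "np \<in> NbrP E sp"
    have "\<forall>ne'\<in>Nbr E x. D (sp, ne') \<le> d" using c extG_back[OF d tr] by metis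
    then have "D1 (np, x) \<noteq> \<infinity>" using s1(2) np by blast
    then show "DF (np, x) \<noteq> \<infinity>" using extG_fin[OF IH(1)] by metis
  qed
  then show ?case using tr IH(2) p1 unfolding DF_def QF_def by simp
qed

definition processed :: "('v \<Rightarrow> 'v \<Rightarrow> bool) \<Rightarrow> ('v state \<Rightarrow> enat) \<Rightarrow> 'v state \<Rightarrow> bool" where
  "processed E D p = (\<forall>ne\<in>Nbr E (snd p). (\<forall>ne'\<in>Nbr E ne. D (fst p, ne') \<le> D p) \<longrightarrow>
      (\<forall>np\<in>NbrP E (fst p). D (np, ne) \<le> D p + 1))"

definition alg_inv :: "('v \<Rightarrow> 'v \<Rightarrow> bool) \<Rightarrow> nat \<Rightarrow> ('v list \<Rightarrow> 'v \<Rightarrow> bool) \<Rightarrow> ('v state \<Rightarrow> enat)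
    \<Rightarrow> 'v state list \<Rightarrow> bool" where
  "alg_inv E m f D Q = (
    (\<forall>s. D s \<noteq> \<infinity> \<longrightarrow> s \<in> states m) \<and>
    (\<forall>s\<in>states m. f (fst s) (snd s) \<longrightarrow> D s = 0) \<and>
    (\<forall>s. D s \<noteq> \<infinity> \<longrightarrow> \<not> f (fst s) (snd s) \<longrightarrow> (\<exists>a\<in>NbrP E (fst s). \<forall>b\<in>Nbr E (snd s). D (a,b) + 1 \<le> D s)) \<and>
    (\<forall>s\<in>set Q. D s \<noteq> \<infinity>) \<and>
    sorted (map D Q) \<and>
    (\<forall>x\<in>set Q. \<forall>y\<in>set Q. D y \<le> D x + 1) \<and>
    (\<forall>p. D p \<noteq> \<infinity> \<longrightarrow> p \<notin> set Q \<longrightarrow> (\<forall>x\<in>set Q. D p \<le> D x) \<and> processed E D p))"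

lemma const_sorted: "(\<forall>x\<in>set xs. x = c) \<Longrightarrow> sorted xs"
  by (induction xs) auto

lemma plus1_fin: "(x::enat) + 1 \<le> y \<Longrightarrow> y \<noteq> \<infinity> \<Longrightarrow> x \<noteq> \<infinity>"
proof
  assume "x + 1 \<le> y" "y \<noteq> \<infinity>" "x = \<infinity>"
  then show False by simp
qed

lemma step_inv:
  assumes u: "\<forall>u v. E u v \<longrightarrow> E v u"
    and st: "alg_step E (D, Q) (D', Q')" and inv: "alg_inv E m f D Q"
  shows "alg_inv E m f D' Q'"
proof -
  from st obtain nes se ordp sp Q0 where
    Q: "Q = (sp, se) # Q0" and nes: "set nes = Nbr E se" and ord: "\<forall>ne. set (ordp ne) = NbrP E sp"
    and res: "(D', Q') = fold (proc_ne E sp (D (sp, se)) ordp) nes (D, Q0)"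
    by (cases rule: alg_step.cases) blast
  define h where "h = (sp, se)"
  define d where "d = D h"
  have i1: "\<forall>s. D s \<noteq> \<infinity> \<longrightarrow> s \<in> states m" using inv unfolding alg_inv_def by blast
  have i2: "\<forall>s\<in>states m. f (fst s) (snd s) \<longrightarrow> D s = 0" using inv unfolding alg_inv_def by blast
  have i3: "\<forall>s. D s \<noteq> \<infinity> \<longrightarrow> \<not> f (fst s) (snd s) \<longrightarrow> (\<exists>a\<in>NbrP E (fst s). \<forall>b\<in>Nbr E (snd s). D (a,b) + 1 \<le> D s)"
    using inv unfolding alg_inv_def by blast
  have i4: "\<forall>s\<in>set Q. D s \<noteq> \<infinity>" using inv unfolding alg_inv_def by blast
  have i5: "sorted (map D Q)" using inv unfolding alg_inv_def by blast
  have i6: "\<forall>x\<in>set Q. \<forall>y\<in>set Q. D y \<le> D x + 1" using inv unfolding alg_inv_def by blast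
  have i7: "\<forall>p. D p \<noteq> \<infinity> \<longrightarrow> p \<notin> set Q \<longrightarrow> (\<forall>x\<in>set Q. D p \<le> D x) \<and> processed E D p"
    using inv unfolding alg_inv_def by blast
  have hQ: "h \<in> set Q" using Q h_def by simp
  have dfin: "d \<noteq> \<infinity>" using i4 hQ d_def by blast
  have fd: "d + 1 \<noteq> \<infinity>" using dsuc_fin[OF dfin] .
  have hS: "h \<in> states m" using i1 dfin d_def by metis
  then have lsp: "length sp = m" unfolding h_def states_def by simp
  have ok: "extG E sp d D Q0 D' Q'
    \<and> (\<forall>ne\<in>set nes. (\<forall>ne'\<in>Nbr E ne. D' (sp, ne') \<le> d) \<longrightarrow> (\<forall>np\<in>NbrP E sp. D' (np, ne) \<noteq> \<infinity>))"
    using fold_ne_ok[OF dfin ord, of D Q0 nes] res[symmetric] unfolding d_def h_def by simp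
  then obtain R where K0: "Q' = Q0 @ R" and K2: "\<forall>s\<in>set R. D s = \<infinity> \<and> D' s = d + 1 \<and> Good E sp d D' s"
    and K3: "\<forall>s. s \<notin> set R \<longrightarrow> D' s = D s" unfolding extG_def by blast
  have ext: "extG E sp d D Q0 D' Q'" using ok by blast
  have P: "\<forall>ne\<in>Nbr E se. (\<forall>ne'\<in>Nbr E ne. D' (sp, ne') \<le> d) \<longrightarrow> (\<forall>np\<in>NbrP E sp. D' (np, ne) \<noteq> \<infinity>)"
    using ok nes by blast
  have K1: "D s \<noteq> \<infinity> \<Longrightarrow> D' s = D s" for s using extG_fin[OF ext] .
  have K4: "D' s \<le> d \<Longrightarrow> D s = D' s" for s using extG_back[OF dfin ext] .
  have sQ0: "sorted (map D Q0)" and dQ0: "\<forall>x\<in>set Q0. d \<le> D x"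
    using i5 unfolding Q d_def h_def by auto
  have OB: "D s \<le> d + 1" if "D s \<noteq> \<infinity>" for s
  proof (cases "s \<in> set Q")
    case True then show ?thesis using i6 hQ d_def by blast
  next
    case False
    then have "D s \<le> d" using i7 that hQ d_def by blast
    also have "d \<le> d + 1" by simp
    finally show ?thesis .
  qed
  have NB: "D' s \<le> d + 1" if "D' s \<noteq> \<infinity>" for s
  proof (cases "s \<in> set R")
    case True then show ?thesis using K2 by simp
  next
    case False then show ?thesis using K3 OB that by metis
  qed
  have QB: "d \<le> D' x \<and> D' x \<le> d + 1 \<and> D' x \<noteq> \<infinity>" if "x \<in> set Q'" for x
  proof (cases "x \<in> set R")
    case True then show ?thesis using K2 fd by simp
  next
    case False
    then have x0: "x \<in> set Q0" using that K0 by simp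
    then have "D x \<noteq> \<infinity>" using i4 Q by simp
    then have "D' x = D x" using K1 by blast
    moreover have "D x \<le> d + 1" using i6 x0 hQ Q d_def h_def by simp
    ultimately show ?thesis using dQ0 x0 \<open>D x \<noteq> \<infinity>\<close> by simp
  qed
  have g1: "\<forall>s. D' s \<noteq> \<infinity> \<longrightarrow> s \<in> states m"
  proof (intro allI impI)
    fix s assume fs: "D' s \<noteq> \<infinity>"
    show "s \<in> states m"
    proof (cases "s \<in> set R")
      case True
      then have "fst s \<in> NbrP E sp" using K2 unfolding Good_def by blast
      then show ?thesis using lsp NbrP_len unfolding states_def by fastforce
    next
      case False then show ?thesis using K3 fs i1 by metis
    qed
  qed
  have g2: "\<forall>s\<in>states m. f (fst s) (snd s) \<longrightarrow> D' s = 0"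
  proof (intro ballI impI)
    fix s assume "s \<in> states m" "f (fst s) (snd s)"
    then have "D s = 0" using i2 by blast
    moreover then have "D s \<noteq> \<infinity>" by simp
    ultimately show "D' s = 0" using K1 by metis
  qed
  have g3: "\<forall>s. D' s \<noteq> \<infinity> \<longrightarrow> \<not> f (fst s) (snd s) \<longrightarrow> (\<exists>a\<in>NbrP E (fst s). \<forall>b\<in>Nbr E (snd s). D' (a,b) + 1 \<le> D' s)"
  proof (intro allI impI)
    fix s assume fs: "D' s \<noteq> \<infinity>" and nf: "\<not> f (fst s) (snd s)"
    show "\<exists>a\<in>NbrP E (fst s). \<forall>b\<in>Nbr E (snd s). D' (a,b) + 1 \<le> D' s"
    proof (cases "s \<in> set R")
      case True
      then have G: "fst s \<in> NbrP E sp" "\<forall>ne'\<in>Nbr E (snd s). D' (sp, ne') \<le> d" "D' s = d + 1"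
        using K2 unfolding Good_def by auto
      have "sp \<in> NbrP E (fst s)" using NbrP_sym[OF u G(1)] .
      moreover have "\<forall>b\<in>Nbr E (snd s). D' (sp, b) + 1 \<le> D' s"
        using G(2,3) by (simp add: add_right_mono)
      ultimately show ?thesis by blast
    next
      case False
      then have eq: "D' s = D s" using K3 by blast
      then obtain a where a: "a \<in> NbrP E (fst s)" "\<forall>b\<in>Nbr E (snd s). D (a,b) + 1 \<le> D s"
        using i3 fs nf by metis
      have "\<forall>b\<in>Nbr E (snd s). D' (a,b) + 1 \<le> D' s"
      proof
        fix b assume b: "b \<in> Nbr E (snd s)"
        then have "D (a,b) \<noteq> \<infinity>" using a(2) plus1_fin fs eq by metis
        then show "D' (a,b) + 1 \<le> D' s" using K1 a(2) b eq by metis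
      qed
      then show ?thesis using a(1) by blast
    qed
  qed
  have g4: "\<forall>s\<in>set Q'. D' s \<noteq> \<infinity>" using QB by blast
  have g5: "sorted (map D' Q')"
  proof -
    have "map D' Q0 = map D Q0" using K1 i4 Q by (intro map_cong) auto
    then have s1: "sorted (map D' Q0)" using sQ0 by (simp only:)
    have s2: "sorted (map D' R)" using K2 by (intro const_sorted[where c="d+1"]) auto
    have s3: "\<forall>x\<in>set (map D' Q0). \<forall>y\<in>set (map D' R). x \<le> y"
      using QB K0 K2 by auto
    show ?thesis using s1 s2 s3 K0 by (simp add: sorted_append)
  qed
  have g6: "\<forall>x\<in>set Q'. \<forall>y\<in>set Q'. D' y \<le> D' x + 1"
  proof (intro ballI)
    fix x y assume "x \<in> set Q'" "y \<in> set Q'"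
    then have "D' y \<le> d + 1" "d \<le> D' x" using QB by auto
    then show "D' y \<le> D' x + 1" using add_right_mono order_trans by metis
  qed
  have g7: "\<forall>p. D' p \<noteq> \<infinity> \<longrightarrow> p \<notin> set Q' \<longrightarrow> (\<forall>x\<in>set Q'. D' p \<le> D' x) \<and> processed E D' p"
  proof (intro allI impI)
    fix p assume fp: "D' p \<noteq> \<infinity>" and pQ: "p \<notin> set Q'"
    then have pR: "p \<notin> set R" and pQ0: "p \<notin> set Q0" using K0 by auto
    then have eqp: "D' p = D p" using K3 by blast
    show "(\<forall>x\<in>set Q'. D' p \<le> D' x) \<and> processed E D' p"
    proof (cases "p = h")
      case True
      have dp: "D' p = d" using eqp True d_def by simp
      have "processed E D' p"
        unfolding processed_def
      proof (intro ballI impI)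
        fix ne np assume ne: "ne \<in> Nbr E (snd p)" and c: "\<forall>ne'\<in>Nbr E ne. D' (fst p, ne') \<le> D' p"
          and np: "np \<in> NbrP E (fst p)"
        have "D' (np, ne) \<noteq> \<infinity>" using P ne c np True dp h_def by simp
        then show "D' (np, ne) \<le> D' p + 1" using NB dp by simp
      qed
      then show ?thesis using QB dp by simp
    next
      case False
      then have pQ1: "p \<notin> set Q" using Q pQ0 h_def by simp
      have fD: "D p \<noteq> \<infinity>" using fp eqp by simp
      have pd: "D p \<le> d" using i7 fD pQ1 hQ d_def by blast
      have A: "\<forall>x\<in>set Q'. D' p \<le> D' x" using QB pd eqp order_trans by metis
      have pr: "processed E D p" using i7 fD pQ1 by blast
      have "processed E D' p"
        unfolding processed_def
      proof (intro ballI impI)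
        fix ne np assume ne: "ne \<in> Nbr E (snd p)" and c: "\<forall>ne'\<in>Nbr E ne. D' (fst p, ne') \<le> D' p"
          and np: "np \<in> NbrP E (fst p)"
        have "\<forall>ne'\<in>Nbr E ne. D (fst p, ne') \<le> D p"
        proof
          fix ne' assume "ne' \<in> Nbr E ne"
          then have 1: "D' (fst p, ne') \<le> D p" using c eqp by simp
          then have "D' (fst p, ne') \<le> d" using pd by simp
          then have "D (fst p, ne') = D' (fst p, ne')" using K4 by blast
          then show "D (fst p, ne') \<le> D p" using 1 by simp
        qed
        then have 2: "D (np, ne) \<le> D p + 1" using pr ne np unfolding processed_def by blast
        then have "D (np, ne) \<noteq> \<infinity>" using fD le_fin dsuc_fin by metis
        then show "D' (np, ne) \<le> D' p + 1" using K1 2 eqp by simp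
      qed
      then show ?thesis using A by simp
    qed
  qed
  show ?thesis unfolding alg_inv_def using g1 g2 g3 g4 g5 g6 g7 by blast
qed

lemma alg_final:
  assumes u: "\<forall>u v. E u v \<longrightarrow> E v u" and out: "alg_output E m f D"
  shows "alg_inv E m f D []"
proof -
  define D0 where "D0 = (\<lambda>s. if s \<in> states m \<and> f (fst s) (snd s) then 0 else (\<infinity>::enat))"
  obtain Q0 where Q0: "set Q0 = {s \<in> states m. f (fst s) (snd s)}"
    and rt: "(alg_step E)\<^sup>*\<^sup>* (D0, Q0) (D, [])"
    using out unfolding alg_output_def D0_def by blast
  have z: "\<forall>s\<in>set Q0. D0 s = 0" using Q0 D0_def by simp
  have inv0: "alg_inv E m f D0 Q0"
    unfolding alg_inv_def
  proof (intro conjI)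
    show "\<forall>s. D0 s \<noteq> \<infinity> \<longrightarrow> s \<in> states m" unfolding D0_def by simp
    show "\<forall>s\<in>states m. f (fst s) (snd s) \<longrightarrow> D0 s = 0" unfolding D0_def by simp
    show "\<forall>s. D0 s \<noteq> \<infinity> \<longrightarrow> \<not> f (fst s) (snd s) \<longrightarrow> (\<exists>a\<in>NbrP E (fst s). \<forall>b\<in>Nbr E (snd s). D0 (a,b) + 1 \<le> D0 s)"
      unfolding D0_def by simp
    show "\<forall>s\<in>set Q0. D0 s \<noteq> \<infinity>" using z by simp
    show "sorted (map D0 Q0)" using z by (intro const_sorted[where c=0]) auto
    show "\<forall>x\<in>set Q0. \<forall>y\<in>set Q0. D0 y \<le> D0 x + 1" using z by simp
    show "\<forall>p. D0 p \<noteq> \<infinity> \<longrightarrow> p \<notin> set Q0 \<longrightarrow> (\<forall>x\<in>set Q0. D0 p \<le> D0 x) \<and> processed E D0 p"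
      using Q0 unfolding D0_def by auto
  qed
  have gen: "(alg_step E)\<^sup>*\<^sup>* x y \<Longrightarrow> alg_inv E m f (fst x) (snd x) \<Longrightarrow> alg_inv E m f (fst y) (snd y)" for x y
  proof (induction rule: rtranclp_induct)
    case base then show ?case .
  next
    case (step y z)
    then show ?case using step_inv[OF u, of "fst y" "snd y" "fst z" "snd z" m f] by simp
  qed
  show ?thesis using gen[OF rt] inv0 by simp
qed

lemma fin_F0: "alg_inv E m f D [] \<Longrightarrow> D s \<noteq> \<infinity> \<Longrightarrow> s \<in> states m"
  unfolding alg_inv_def by blast

lemma fin_F1: "alg_inv E m f D [] \<Longrightarrow> s \<in> states m \<Longrightarrow> f (fst s) (snd s) \<Longrightarrow> D s = 0"
  unfolding alg_inv_def by blast

lemma fin_F2: "alg_inv E m f D [] \<Longrightarrow> D s \<noteq> \<infinity> \<Longrightarrow> \<not> f (fst s) (snd s) \<Longrightarrow>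
   \<exists>a\<in>NbrP E (fst s). \<forall>b\<in>Nbr E (snd s). D (a,b) + 1 \<le> D s"
  unfolding alg_inv_def by blast

lemma Nbr_fin: "finite (Nbr (E :: 'v::finite \<Rightarrow> 'v \<Rightarrow> bool) v)" by simp

lemma fin_F3:
  fixes E :: "'v::finite \<Rightarrow> 'v \<Rightarrow> bool"
  assumes u: "\<forall>u v. E u v \<longrightarrow> E v u" and inv: "alg_inv E m f D []"
    and a: "a \<in> NbrP E (fst s)" and k: "\<forall>b\<in>Nbr E (snd s). D (a,b) \<le> k"
  shows "D s \<le> k + 1"
proof (cases "k = \<infinity>")
  case True then show ?thesis by simp
next
  case False
  define M where "M = Max ((\<lambda>b. D (a,b)) ` Nbr E (snd s))"
  have ne: "Nbr E (snd s) \<noteq> {}" using Nbr_self[of "snd s" E] by blast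
  have "M \<in> (\<lambda>b. D (a,b)) ` Nbr E (snd s)" unfolding M_def using ne by (intro Max_in) auto
  then obtain b0 where b0: "b0 \<in> Nbr E (snd s)" "D (a,b0) = M" by blast
  have Mge: "\<forall>b\<in>Nbr E (snd s). D (a,b) \<le> M" unfolding M_def by (intro ballI Max_ge) auto
  have "M \<le> k" using k b0 by metis
  then have finM: "D (a,b0) \<noteq> \<infinity>" using False b0 le_fin by metis
  have pr: "processed E D (a,b0)" using inv finM unfolding alg_inv_def by simp
  have "snd s \<in> Nbr E b0" using Nbr_sym[OF u b0(1)] .
  moreover have "\<forall>ne'\<in>Nbr E (snd s). D (a, ne') \<le> D (a, b0)" using Mge b0 by simp
  moreover have "fst s \<in> NbrP E a" using NbrP_sym[OF u a] .
  ultimately have "D (fst s, snd s) \<le> D (a, b0) + 1" using pr unfolding processed_def by (simp only: fst_conv snd_conv)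
  then have "D s \<le> M + 1" using b0 by simp
  also have "\<dots> \<le> k + 1" using \<open>M \<le> k\<close> by (simp add: add_right_mono)
  finally show ?thesis .
qed

lemma states_finite: "finite (states m :: ('v::finite) state set)"
proof -
  have "states m \<subseteq> {xs. set xs \<subseteq> (UNIV::'v set) \<and> length xs = m} \<times> (UNIV :: 'v set)"
    unfolding states_def by auto
  moreover have "finite ({xs. set xs \<subseteq> (UNIV::'v set) \<and> length xs = m} \<times> (UNIV :: 'v set))"
    by (intro finite_SigmaI finite_lists_length_eq) auto
  ultimately show ?thesis by (rule finite_subset)
qed

lemma states_ne: "states m \<noteq> {}"
proof -
  have "(replicate m undefined, undefined) \<in> states m" unfolding states_def by simp
  then show ?thesis by blast
qed

lemma NbrP_finite: "finite (NbrP (E :: 'v::finite \<Rightarrow> 'v \<Rightarrow> bool) sp)"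
proof -
  have "NbrP E sp \<subseteq> {xs. set xs \<subseteq> (UNIV::'v set) \<and> length xs = length sp}"
    unfolding NbrP_def by auto
  then show ?thesis using finite_lists_length_eq[of "UNIV::'v set"] finite_subset by auto
qed

lemma NbrP_ne: "NbrP E sp \<noteq> {}" using NbrP_self[of sp E] by blast

lemma Nbr_ne: "Nbr E v \<noteq> {}" using Nbr_self[of v E] by blast

lemma Min_diff:
  fixes F1 F2 :: "'b \<Rightarrow> real"
  assumes "finite N" "N \<noteq> {}" "\<forall>b\<in>N. \<bar>F1 b - F2 b\<bar> \<le> c"
  shows "\<bar>Min (F1 ` N) - Min (F2 ` N)\<bar> \<le> c"
proof -
  have "Min (F1 ` N) \<in> F1 ` N" using assms by (intro Min_in) auto
  then obtain b1 where b1: "b1 \<in> N" "F1 b1 = Min (F1 ` N)" by auto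
  have "Min (F2 ` N) \<in> F2 ` N" using assms by (intro Min_in) auto
  then obtain b2 where b2: "b2 \<in> N" "F2 b2 = Min (F2 ` N)" by auto
  have "Min (F1 ` N) \<le> F1 b2" using assms b2 by (intro Min_le) auto
  moreover have "Min (F2 ` N) \<le> F2 b1" using assms b1 by (intro Min_le) auto
  moreover have "\<bar>F1 b2 - F2 b2\<bar> \<le> c" "\<bar>F1 b1 - F2 b1\<bar> \<le> c" using assms b1 b2 by auto
  ultimately show ?thesis using b1 b2 by (simp add: abs_le_iff)
qed

lemma Sup_diff:
  fixes A1 A2 :: "'b \<Rightarrow> real"
  assumes "P \<noteq> {}" "\<forall>p\<in>P. A1 p \<le> B" "\<forall>p\<in>P. A2 p \<le> B" "\<forall>p\<in>P. \<bar>A1 p - A2 p\<bar> \<le> c"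
  shows "\<bar>Sup (A1 ` P) - Sup (A2 ` P)\<bar> \<le> c"
proof -
  have bd1: "bdd_above (A1 ` P)" using assms(2) by (intro bdd_aboveI[where M=B]) auto
  have bd2: "bdd_above (A2 ` P)" using assms(3) by (intro bdd_aboveI[where M=B]) auto
  have "Sup (A1 ` P) \<le> Sup (A2 ` P) + c"
  proof (rule cSUP_least[OF assms(1)])
    fix p assume p: "p \<in> P"
    have "A2 p \<le> Sup (A2 ` P)" using cSUP_upper[OF p bd2] .
    then show "A1 p \<le> Sup (A2 ` P) + c" using assms(4) p by (auto simp: abs_le_iff)
  qed
  moreover have "Sup (A2 ` P) \<le> Sup (A1 ` P) + c"
  proof (rule cSUP_least[OF assms(1)])
    fix p assume p: "p \<in> P"
    have "A1 p \<le> Sup (A1 ` P)" using cSUP_upper[OF p bd1] .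
    then show "A2 p \<le> Sup (A1 ` P) + c" using assms(4) p by (auto simp: abs_le_iff)
  qed
  ultimately show ?thesis by (simp add: abs_le_iff)
qed

lemma exp_diff:
  fixes F G :: "'a \<Rightarrow> real"
  assumes "\<forall>x. \<bar>F x\<bar> \<le> B" "\<forall>x. \<bar>G x\<bar> \<le> B" "\<forall>x\<in>set_pmf p. \<bar>F x - G x\<bar> \<le> c"
  shows "\<bar>measure_pmf.expectation p F - measure_pmf.expectation p G\<bar> \<le> c"
proof -
  have bF: "\<forall>x. \<bar>F x\<bar> \<le> B + \<bar>c\<bar>" "\<forall>x. \<bar>G x\<bar> \<le> B + \<bar>c\<bar>"
    "\<forall>x. \<bar>F x + c\<bar> \<le> B + \<bar>c\<bar>" "\<forall>x. \<bar>G x + c\<bar> \<le> B + \<bar>c\<bar>"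
  proof -
    show "\<forall>x. \<bar>F x\<bar> \<le> B + \<bar>c\<bar>"
    proof fix x show "\<bar>F x\<bar> \<le> B + \<bar>c\<bar>" using assms(1)[rule_format, of x] abs_ge_zero[of c] by linarith qed
    show "\<forall>x. \<bar>G x\<bar> \<le> B + \<bar>c\<bar>"
    proof fix x show "\<bar>G x\<bar> \<le> B + \<bar>c\<bar>" using assms(2)[rule_format, of x] abs_ge_zero[of c] by linarith qed
    show "\<forall>x. \<bar>F x + c\<bar> \<le> B + \<bar>c\<bar>"
    proof fix x show "\<bar>F x + c\<bar> \<le> B + \<bar>c\<bar>" using assms(1)[rule_format, of x] abs_triangle_ineq[of "F x" c] by linarith qed
    show "\<forall>x. \<bar>G x + c\<bar> \<le> B + \<bar>c\<bar>"
    proof fix x show "\<bar>G x + c\<bar> \<le> B + \<bar>c\<bar>" using assms(2)[rule_format, of x] abs_triangle_ineq[of "G x" c] by linarith qed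
  qed
  have "measure_pmf.expectation p F \<le> measure_pmf.expectation p (\<lambda>x. G x + c)"
    by (rule pmf_exp_mono[OF bF(1) bF(4)]) (use assms(3) in \<open>auto simp: abs_le_iff\<close>)
  also have "\<dots> = measure_pmf.expectation p G + c"
    using pmf_integrable_bdd[OF assms(2)] by simp
  finally have 1: "measure_pmf.expectation p F \<le> measure_pmf.expectation p G + c" .
  have "measure_pmf.expectation p G \<le> measure_pmf.expectation p (\<lambda>x. F x + c)"
    by (rule pmf_exp_mono[OF bF(2) bF(3)]) (use assms(3) in \<open>auto simp: abs_le_iff\<close>)
  also have "\<dots> = measure_pmf.expectation p F + c"
    using pmf_integrable_bdd[OF assms(1)] by simp
  finally have 2: "measure_pmf.expectation p G \<le> measure_pmf.expectation p F + c" .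
  show ?thesis using 1 2 by (simp add: abs_le_iff)
qed

lemma nash_unique:
  fixes E :: "'v::finite \<Rightarrow> 'v \<Rightarrow> bool"
  assumes g: "0 < \<gamma>" "\<gamma> < 1" and V1: "is_nash_value E m f \<gamma> V1" and V2: "is_nash_value E m f \<gamma> V2"
  shows "V1 = V2"
proof -
  have fS: "finite (states m :: 'v state set)" by (rule states_finite)
  have neS: "states m \<noteq> ({} :: 'v state set)" by (rule states_ne)
  have sh1: "\<forall>s\<in>states m. V1 s = shapley_rhs E f \<gamma> V1 s" and z1: "\<forall>s. s \<notin> states m \<longrightarrow> V1 s = 0"
    using V1 unfolding is_nash_value_def by auto
  have sh2: "\<forall>s\<in>states m. V2 s = shapley_rhs E f \<gamma> V2 s" and z2: "\<forall>s. s \<notin> states m \<longrightarrow> V2 s = 0"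
    using V2 unfolding is_nash_value_def by auto
  obtain s0 :: "'v state" where s0: "s0 \<in> states m" using neS by blast
  define M1 where "M1 = Max ((\<lambda>s. \<bar>V1 s\<bar>) ` states m)"
  define M2 where "M2 = Max ((\<lambda>s. \<bar>V2 s\<bar>) ` states m)"
  have M1ge: "\<forall>s\<in>states m. \<bar>V1 s\<bar> \<le> M1" unfolding M1_def using fS by auto
  have M2ge: "\<forall>s\<in>states m. \<bar>V2 s\<bar> \<le> M2" unfolding M2_def using fS by auto
  have M1p: "0 \<le> M1" using M1ge s0 abs_ge_zero order_trans by metis
  have M2p: "0 \<le> M2" using M2ge s0 abs_ge_zero order_trans by metis
  define Bd where "Bd = M1 + M2"
  have bV1: "\<forall>x. \<bar>V1 x\<bar> \<le> Bd"
  proof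
    fix x show "\<bar>V1 x\<bar> \<le> Bd"
    proof (cases "x \<in> states m")
      case True
      then have "\<bar>V1 x\<bar> \<le> M1" using M1ge by blast
      then show ?thesis using M1p M2p unfolding Bd_def by linarith
    next
      case False
      then have "V1 x = 0" using z1 by blast
      then show ?thesis using M1p M2p unfolding Bd_def by simp
    qed
  qed
  have bV2: "\<forall>x. \<bar>V2 x\<bar> \<le> Bd"
  proof
    fix x show "\<bar>V2 x\<bar> \<le> Bd"
    proof (cases "x \<in> states m")
      case True
      then have "\<bar>V2 x\<bar> \<le> M2" using M2ge by blast
      then show ?thesis using M1p M2p unfolding Bd_def by linarith
    next
      case False
      then have "V2 x = 0" using z2 by blast
      then show ?thesis using M1p M2p unfolding Bd_def by simp
    qed
  qed
  define \<delta> where "\<delta> = Max ((\<lambda>s. \<bar>V1 s - V2 s\<bar>) ` states m)"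
  have dl: "\<forall>s\<in>states m. \<bar>V1 s - V2 s\<bar> \<le> \<delta>" unfolding \<delta>_def using fS by auto
  have dp: "0 \<le> \<delta>" using dl s0 abs_ge_zero order_trans by metis
  have key: "\<bar>V1 s - V2 s\<bar> \<le> \<gamma> * \<delta>" if sS: "s \<in> states m" for s
  proof (cases "f (fst s) (snd s)")
    case True
    then have "V1 s = 1" "V2 s = 1" using sh1 sh2 sS unfolding shapley_rhs_def by auto
    then show ?thesis using dp g by simp
  next
    case False
    define P where "P = {p. set_pmf p \<subseteq> NbrP E (fst s)}"
    define N where "N = Nbr E (snd s)"
    define F1 where "F1 p b = \<gamma> * measure_pmf.expectation p (\<lambda>a. V1 (a, b))" for p b
    define F2 where "F2 p b = \<gamma> * measure_pmf.expectation p (\<lambda>a. V2 (a, b))" for p b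
    define A1 where "A1 p = Min (F1 p ` N)" for p
    define A2 where "A2 p = Min (F2 p ` N)" for p
    have eV1: "V1 s = Sup (A1 ` P)" using sh1 sS False
      unfolding shapley_rhs_def A1_def F1_def P_def N_def by simp
    have eV2: "V2 s = Sup (A2 ` P)" using sh2 sS False
      unfolding shapley_rhs_def A2_def F2_def P_def N_def by simp
    have "return_pmf (fst s) \<in> P" unfolding P_def using NbrP_self[of "fst s" E] by simp
    then have Pne: "P \<noteq> {}" by blast
    have fN: "finite N" "N \<noteq> {}" unfolding N_def using Nbr_ne[of E "snd s"] by auto
    have bF1: "\<bar>F1 p b\<bar> \<le> Bd" for p b
    proof -
      have "\<bar>measure_pmf.expectation p (\<lambda>a. V1 (a, b))\<bar> \<le> Bd" using bV1 by (intro pmf_exp_abs_bound) auto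
      moreover have "\<gamma> * \<bar>measure_pmf.expectation p (\<lambda>a. V1 (a, b))\<bar> \<le> \<bar>measure_pmf.expectation p (\<lambda>a. V1 (a, b))\<bar>"
        using g by (intro mult_left_le_one_le) auto
      ultimately show ?thesis unfolding F1_def using g by (simp add: abs_mult)
    qed
    have bF2: "\<bar>F2 p b\<bar> \<le> Bd" for p b
    proof -
      have "\<bar>measure_pmf.expectation p (\<lambda>a. V2 (a, b))\<bar> \<le> Bd" using bV2 by (intro pmf_exp_abs_bound) auto
      moreover have "\<gamma> * \<bar>measure_pmf.expectation p (\<lambda>a. V2 (a, b))\<bar> \<le> \<bar>measure_pmf.expectation p (\<lambda>a. V2 (a, b))\<bar>"
        using g by (intro mult_left_le_one_le) auto
      ultimately show ?thesis unfolding F2_def using g by (simp add: abs_mult)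
    qed
    obtain b0 where b0: "b0 \<in> N" using fN by blast
    have A1B: "\<forall>p\<in>P. A1 p \<le> Bd"
    proof
      fix p have "A1 p \<le> F1 p b0" unfolding A1_def using fN b0 by (intro Min_le) auto
      then show "A1 p \<le> Bd" using bF1[of p b0] by linarith
    qed
    have A2B: "\<forall>p\<in>P. A2 p \<le> Bd"
    proof
      fix p have "A2 p \<le> F2 p b0" unfolding A2_def using fN b0 by (intro Min_le) auto
      then show "A2 p \<le> Bd" using bF2[of p b0] by linarith
    qed
    have Ad: "\<forall>p\<in>P. \<bar>A1 p - A2 p\<bar> \<le> \<gamma> * \<delta>"
    proof
      fix p assume p: "p \<in> P"
      have "\<forall>b\<in>N. \<bar>F1 p b - F2 p b\<bar> \<le> \<gamma> * \<delta>"
      proof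
        fix b assume b: "b \<in> N"
        have "\<forall>a\<in>set_pmf p. \<bar>V1 (a, b) - V2 (a, b)\<bar> \<le> \<delta>"
        proof
          fix a assume "a \<in> set_pmf p"
          then have "a \<in> NbrP E (fst s)" using p unfolding P_def by auto
          then have "(a, b) \<in> states m" using sS NbrP_len unfolding states_def by fastforce
          then show "\<bar>V1 (a, b) - V2 (a, b)\<bar> \<le> \<delta>" using dl by blast
        qed
        then have "\<bar>measure_pmf.expectation p (\<lambda>a. V1 (a, b)) - measure_pmf.expectation p (\<lambda>a. V2 (a, b))\<bar> \<le> \<delta>"
          using bV1 bV2 by (intro exp_diff[where B=Bd]) auto
        then have "\<gamma> * \<bar>measure_pmf.expectation p (\<lambda>a. V1 (a, b)) - measure_pmf.expectation p (\<lambda>a. V2 (a, b))\<bar> \<le> \<gamma> * \<delta>"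
          using g by simp
        then show "\<bar>F1 p b - F2 p b\<bar> \<le> \<gamma> * \<delta>" unfolding F1_def F2_def using g
          by (simp add: abs_mult right_diff_distrib[symmetric])
      qed
      then show "\<bar>A1 p - A2 p\<bar> \<le> \<gamma> * \<delta>" unfolding A1_def A2_def using fN by (intro Min_diff) auto
    qed
    show ?thesis using Sup_diff[OF Pne A1B A2B Ad] eV1 eV2 by simp
  qed
  have "\<delta> \<in> (\<lambda>s. \<bar>V1 s - V2 s\<bar>) ` states m" unfolding \<delta>_def using fS neS by (intro Max_in) auto
  then obtain s1 where s1: "s1 \<in> states m" "\<delta> = \<bar>V1 s1 - V2 s1\<bar>" by blast
  then have "\<delta> \<le> \<gamma> * \<delta>" using key by simp
  then have "\<delta> \<le> 0" using g dp by (smt (verit) mult_le_cancel_right1)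
  then have d0: "\<delta> = 0" using dp by simp
  show ?thesis
  proof
    fix x show "V1 x = V2 x"
    proof (cases "x \<in> states m")
      case True then show ?thesis using dl d0 by fastforce
    next
      case False then show ?thesis using z1 z2 by metis
    qed
  qed
qed

theorem theorem1:
  fixes E :: "'v::finite \<Rightarrow> 'v \<Rightarrow> bool"
    and m :: nat
    and f :: "'v list \<Rightarrow> 'v \<Rightarrow> bool"
    and \<gamma> :: real
    and D :: "'v state \<Rightarrow> enat"
    and \<mu> :: "'v state \<Rightarrow> 'v list"
    and \<nu> :: "'v state \<Rightarrow> 'v"
  assumes undirected: "\<forall>u v. E u v \<longrightarrow> E v u"
    and m_pos: "m \<ge> 1"
    and gamma: "0 < \<gamma>" "\<gamma> < 1"
    and alg_out: "alg_output E m f D"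
    and mu_def: "alg_pursuer_policy E m D \<mu>"
    and nu_def: "alg_evader_policy E m D \<nu>"
    and pure_NE: "has_pure_nash_eq E m f \<gamma>"
  shows "(\<forall>s\<in>states m. nash_value E m f \<gamma> s = enat_pow \<gamma> (D s)) \<and>
         is_nash_eq E m f \<gamma> (\<lambda>s. return_pmf (\<mu> s)) (\<lambda>s. return_pmf (\<nu> s))"
proof -
  have u: "\<forall>u v. E u v \<longrightarrow> E v u" by (rule undirected)
  have g: "0 < \<gamma>" "\<gamma> < 1" by (rule gamma)+
  have inv: "alg_inv E m f D []" using alg_final[OF u alg_out] .
  have inS: "(a, b) \<in> states m" if "s \<in> states m" "a \<in> NbrP E (fst s)" for s a b
    using that NbrP_len unfolding states_def by fastforce
  have muN: "\<forall>s\<in>states m. \<mu> s \<in> NbrP E (fst s)" using mu_def unfolding alg_pursuer_policy_def by blast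
  have nuN: "\<forall>s\<in>states m. \<nu> s \<in> Nbr E (snd s)" using nu_def unfolding alg_evader_policy_def by blast
  have P1: "D (\<mu> s, b) + 1 \<le> D s" if sS: "s \<in> states m" and nf: "\<not> f (fst s) (snd s)" and b: "b \<in> Nbr E (snd s)" for s b
  proof (cases "D s = \<infinity>")
    case True then show ?thesis by simp
  next
    case False
    obtain a where a: "a \<in> NbrP E (fst s)" "\<forall>b\<in>Nbr E (snd s). D (a,b) + 1 \<le> D s"
      using fin_F2[OF inv False nf] by blast
    define Mx where "Mx x = Max ((\<lambda>ne. D (x, ne)) ` Nbr E (snd s))" for x
    have "Mx (\<mu> s) \<le> Mx a" using mu_def sS a(1) unfolding alg_pursuer_policy_def Mx_def by blast
    moreover have "D (\<mu> s, b) \<le> Mx (\<mu> s)" unfolding Mx_def using b by (intro Max_ge) auto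
    moreover have "Mx a \<in> (\<lambda>ne. D (a, ne)) ` Nbr E (snd s)" unfolding Mx_def using Nbr_ne[of E "snd s"]
      by (intro Max_in) auto
    then obtain b1 where "b1 \<in> Nbr E (snd s)" "Mx a = D (a, b1)" by blast
    then have "Mx a + 1 \<le> D s" using a(2) by simp
    ultimately show ?thesis by (meson add_right_mono order_trans)
  qed
  obtain p q where NE: "is_nash_eq E m f \<gamma> (\<lambda>s. return_pmf (p s)) (\<lambda>s. return_pmf (q s))"
    using pure_NE unfolding has_pure_nash_eq_def by blast
  define W where "W = policy_value f \<gamma> (\<lambda>s. return_pmf (p s)) (\<lambda>s. return_pmf (q s))"
  have pN: "\<forall>s\<in>states m. p s \<in> NbrP E (fst s)" using NE unfolding is_nash_eq_def valid_ppol_def by auto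
  have qN: "\<forall>s\<in>states m. q s \<in> Nbr E (snd s)" using NE unfolding is_nash_eq_def valid_epol_def by auto
  have BR1: "\<forall>s\<in>states m. policy_value f \<gamma> mu' (\<lambda>s. return_pmf (q s)) s \<le> W s" if "valid_ppol E m mu'" for mu'
    using NE that unfolding is_nash_eq_def W_def by blast
  have BR2: "\<forall>s\<in>states m. W s \<le> policy_value f \<gamma> (\<lambda>s. return_pmf (p s)) nu' s" if "valid_epol E m nu'" for nu'
    using NE that unfolding is_nash_eq_def W_def by blast
  define e where "e s = (SOME b. b \<in> Nbr E (snd s) \<and> (\<forall>b'\<in>Nbr E (snd s). D (p s, b') \<le> D (p s, b)))" for s
  have e_prop: "e s \<in> Nbr E (snd s) \<and> (\<forall>b'\<in>Nbr E (snd s). D (p s, b') \<le> D (p s, e s))" for s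
  proof -
    define M where "M = Max ((\<lambda>b. D (p s, b)) ` Nbr E (snd s))"
    have "M \<in> (\<lambda>b. D (p s, b)) ` Nbr E (snd s)" unfolding M_def using Nbr_ne[of E "snd s"]
      by (intro Max_in) auto
    then obtain b where b: "b \<in> Nbr E (snd s)" "D (p s, b) = M" by blast
    have "\<forall>b'\<in>Nbr E (snd s). D (p s, b') \<le> M" unfolding M_def by (intro ballI Max_ge) auto
    then have "\<exists>b. b \<in> Nbr E (snd s) \<and> (\<forall>b'\<in>Nbr E (snd s). D (p s, b') \<le> D (p s, b))" using b by metis
    then show ?thesis unfolding e_def by (rule someI_ex)
  qed
  have W_le: "W s \<le> enat_pow \<gamma> (D s)" if sS: "s \<in> states m" for s
  proof -
    have ve: "valid_epol E m (\<lambda>s. return_pmf (e s))" unfolding valid_epol_def using e_prop by simp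
    have "policy_value f \<gamma> (\<lambda>s. return_pmf (p s)) (\<lambda>s. return_pmf (e s)) s \<le> enat_pow \<gamma> (D s)"
    proof (rule val_upper[OF g _ sS])
      show "\<forall>s\<in>states m. (f (fst s) (snd s) \<longrightarrow> D s = 0) \<and> (\<not> f (fst s) (snd s) \<longrightarrow>
        (\<forall>a\<in>set_pmf (return_pmf (p s)). \<forall>b\<in>set_pmf (return_pmf (e s)). (a, b) \<in> states m \<and> D s \<le> D (a, b) + 1))"
      proof (intro ballI)
        fix s :: "'v state" assume s: "s \<in> states m"
        have 1: "f (fst s) (snd s) \<longrightarrow> D s = 0" using fin_F1[OF inv s] by simp
        have 2: "(p s, e s) \<in> states m" using inS[OF s] pN s by blast
        have 3: "D s \<le> D (p s, e s) + 1"
          using pN s fin_F3[OF u inv, of "p s" s "D (p s, e s)"] e_prop[of s] by blast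
        show "(f (fst s) (snd s) \<longrightarrow> D s = 0) \<and> (\<not> f (fst s) (snd s) \<longrightarrow>
          (\<forall>a\<in>set_pmf (return_pmf (p s)). \<forall>b\<in>set_pmf (return_pmf (e s)). (a, b) \<in> states m \<and> D s \<le> D (a, b) + 1))"
          using 1 2 3 by simp
      qed
    qed
    then show ?thesis using BR2[OF ve] sS by (meson order_trans)
  qed
  have saddle: "D s \<le> D (a, q s) + 1" if sS: "s \<in> states m" and nf: "\<not> f (fst s) (snd s)"
    and a: "a \<in> NbrP E (fst s)" for s a
  proof (rule ccontr)
    assume "\<not> D s \<le> D (a, q s) + 1"
    then have lt: "D (a, q s) + 1 < D s" by (simp add: not_le)
    define p2 where "p2 x = (if x = s then a else \<mu> x)" for x
    define h2 where "h2 x = (if x = s then D (a, q s) + 1 else D x)" for x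
    have h2D: "h2 x \<le> D x" for x unfolding h2_def using lt by auto
    have vp2: "valid_ppol E m (\<lambda>x. return_pmf (p2 x))"
      unfolding valid_ppol_def p2_def using a muN by auto
    have "enat_pow \<gamma> (h2 s) \<le> policy_value f \<gamma> (\<lambda>x. return_pmf (p2 x)) (\<lambda>x. return_pmf (q x)) s"
    proof (rule val_lower[OF g _ sS])
      show "\<forall>s'\<in>states m. \<not> f (fst s') (snd s') \<longrightarrow> h2 s' \<noteq> \<infinity> \<longrightarrow>
        (\<forall>a'\<in>set_pmf (return_pmf (p2 s')). \<forall>b\<in>set_pmf (return_pmf (q s')). (a', b) \<in> states m \<and> h2 (a', b) + 1 \<le> h2 s')"
      proof (intro ballI impI)
        fix s' :: "'v state" and a' b assume s': "s' \<in> states m" and nf': "\<not> f (fst s') (snd s')" and fin: "h2 s' \<noteq> \<infinity>"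
          and a': "a' \<in> set_pmf (return_pmf (p2 s'))" and b: "b \<in> set_pmf (return_pmf (q s'))"
        have ab: "a' = p2 s'" "b = q s'" using a' b by auto
        show "(a', b) \<in> states m \<and> h2 (a', b) + 1 \<le> h2 s'"
        proof (cases "s' = s")
          case True
          have "h2 (a, q s) + 1 \<le> D (a, q s) + 1" using h2D by (simp add: add_right_mono)
          moreover have "h2 s' = D (a, q s) + 1" using True h2_def by simp
          moreover have "a' = a" "b = q s" using ab True p2_def by simp_all
          ultimately show ?thesis using inS[OF sS a] by simp
        next
          case False
          have "b \<in> Nbr E (snd s')" using qN s' ab by simp
          then have "D (\<mu> s', b) + 1 \<le> D s'" using P1[OF s' nf'] by blast
          moreover have "h2 (\<mu> s', b) + 1 \<le> D (\<mu> s', b) + 1" using h2D by (simp add: add_right_mono)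
          ultimately have "h2 (\<mu> s', b) + 1 \<le> D s'" by (rule order_trans[rotated])
          moreover have "h2 s' = D s'" using False h2_def by simp
          moreover have "a' = \<mu> s'" "b = q s'" using ab False p2_def by simp_all
          moreover have "(\<mu> s', q s') \<in> states m" using inS[OF s'] muN s' by blast
          ultimately show ?thesis by simp
        qed
      qed
    qed
    also have "\<dots> \<le> W s" using BR1[OF vp2] sS by blast
    also have "\<dots> \<le> enat_pow \<gamma> (D s)" using W_le[OF sS] .
    finally have "enat_pow \<gamma> (h2 s) \<le> enat_pow \<gamma> (D s)" .
    moreover have "enat_pow \<gamma> (D s) < enat_pow \<gamma> (h2 s)" using ep_strict[OF g] lt unfolding h2_def by simp
    ultimately show False by simp
  qed
  have nuP: "D s \<le> D (a, \<nu> s) + 1" if sS: "s \<in> states m" and nf: "\<not> f (fst s) (snd s)"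
    and a: "a \<in> NbrP E (fst s)" for s a
  proof -
    define Mn where "Mn b = Min ((\<lambda>np. D (np, b)) ` NbrP E (fst s))" for b
    have "Mn (q s) \<le> Mn (\<nu> s)" using nu_def sS qN unfolding alg_evader_policy_def Mn_def by blast
    moreover have "Mn (q s) \<in> (\<lambda>np. D (np, q s)) ` NbrP E (fst s)" unfolding Mn_def
      using NbrP_finite[of E "fst s"] NbrP_ne[of E "fst s"] by (intro Min_in) auto
    then obtain a0 where a0: "a0 \<in> NbrP E (fst s)" "Mn (q s) = D (a0, q s)" by blast
    moreover have "Mn (\<nu> s) \<le> D (a, \<nu> s)" unfolding Mn_def using NbrP_finite[of E "fst s"] a
      by (intro Min_le) auto
    ultimately have "Mn (q s) + 1 \<le> D (a, \<nu> s) + 1" by (meson add_right_mono order_trans)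
    moreover have "D s \<le> Mn (q s) + 1" using saddle[OF sS nf a0(1)] a0(2) by simp
    ultimately show ?thesis by (meson order_trans)
  qed
  have VL: "enat_pow \<gamma> (D s) \<le> policy_value f \<gamma> (\<lambda>s. return_pmf (\<mu> s)) nu' s"
    if vn: "valid_epol E m nu'" and sS: "s \<in> states m" for nu' s
  proof (rule val_lower[OF g _ sS])
    show "\<forall>s\<in>states m. \<not> f (fst s) (snd s) \<longrightarrow> D s \<noteq> \<infinity> \<longrightarrow>
        (\<forall>a\<in>set_pmf (return_pmf (\<mu> s)). \<forall>b\<in>set_pmf (nu' s). (a, b) \<in> states m \<and> D (a, b) + 1 \<le> D s)"
    proof (intro ballI impI)
      fix s :: "'v state" and a b assume s: "s \<in> states m" and nf: "\<not> f (fst s) (snd s)"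
        and a: "a \<in> set_pmf (return_pmf (\<mu> s))" and b: "b \<in> set_pmf (nu' s)"
      have bN: "b \<in> Nbr E (snd s)" using vn s b unfolding valid_epol_def by blast
      show "(a, b) \<in> states m \<and> D (a, b) + 1 \<le> D s"
        using a P1[OF s nf bN] inS[OF s] muN s by auto
    qed
  qed
  have VU: "policy_value f \<gamma> mu' (\<lambda>s. return_pmf (\<nu> s)) s \<le> enat_pow \<gamma> (D s)"
    if vm: "valid_ppol E m mu'" and sS: "s \<in> states m" for mu' s
  proof (rule val_upper[OF g _ sS])
    show "\<forall>s\<in>states m. (f (fst s) (snd s) \<longrightarrow> D s = 0) \<and> (\<not> f (fst s) (snd s) \<longrightarrow>
        (\<forall>a\<in>set_pmf (mu' s). \<forall>b\<in>set_pmf (return_pmf (\<nu> s)). (a, b) \<in> states m \<and> D s \<le> D (a, b) + 1))"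
    proof (intro ballI)
      fix s :: "'v state" assume s: "s \<in> states m"
      have 1: "f (fst s) (snd s) \<longrightarrow> D s = 0" using fin_F1[OF inv s] by simp
      have 2: "\<forall>a\<in>set_pmf (mu' s). \<forall>b\<in>set_pmf (return_pmf (\<nu> s)). (a, b) \<in> states m \<and> D s \<le> D (a, b) + 1"
        if nf: "\<not> f (fst s) (snd s)"
      proof (intro ballI)
        fix a b assume a: "a \<in> set_pmf (mu' s)" and b: "b \<in> set_pmf (return_pmf (\<nu> s))"
        have aN: "a \<in> NbrP E (fst s)" using vm s a unfolding valid_ppol_def by blast
        show "(a, b) \<in> states m \<and> D s \<le> D (a, b) + 1"
          using b nuP[OF s nf aN] inS[OF s aN] by auto
      qed
      show "(f (fst s) (snd s) \<longrightarrow> D s = 0) \<and> (\<not> f (fst s) (snd s) \<longrightarrow>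
        (\<forall>a\<in>set_pmf (mu' s). \<forall>b\<in>set_pmf (return_pmf (\<nu> s)). (a, b) \<in> states m \<and> D s \<le> D (a, b) + 1))"
        using 1 2 by blast
    qed
  qed
  have vmu: "valid_ppol E m (\<lambda>s. return_pmf (\<mu> s))" unfolding valid_ppol_def using muN by simp
  have vnu: "valid_epol E m (\<lambda>s. return_pmf (\<nu> s))" unfolding valid_epol_def using nuN by simp
  have Veq: "policy_value f \<gamma> (\<lambda>s. return_pmf (\<mu> s)) (\<lambda>s. return_pmf (\<nu> s)) s = enat_pow \<gamma> (D s)"
    if sS: "s \<in> states m" for s
    using VL[OF vnu sS] VU[OF vmu sS] by simp
  have NEmn: "is_nash_eq E m f \<gamma> (\<lambda>s. return_pmf (\<mu> s)) (\<lambda>s. return_pmf (\<nu> s))"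
    unfolding is_nash_eq_def using vmu vnu Veq VL VU by simp
  define V0 where "V0 s = (if s \<in> states m then enat_pow \<gamma> (D s) else 0)" for s
  have bV0: "\<forall>x. \<bar>V0 x\<bar> \<le> 1" unfolding V0_def using ep_nonneg[of \<gamma>] ep_le1[of \<gamma>] g by simp
  have shap: "V0 s = shapley_rhs E f \<gamma> V0 s" if sS: "s \<in> states m" for s
  proof (cases "f (fst s) (snd s)")
    case True
    then show ?thesis using fin_F1[OF inv sS] sS unfolding shapley_rhs_def V0_def by simp
  next
    case nf: False
    define P where "P = {p. set_pmf p \<subseteq> NbrP E (fst s)}"
    define N where "N = Nbr E (snd s)"
    define A where "A p = Min ((\<lambda>b. \<gamma> * measure_pmf.expectation p (\<lambda>a. V0 (a, b))) ` N)" for p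
    have rhs: "shapley_rhs E f \<gamma> V0 s = Sup (A ` P)" unfolding shapley_rhs_def A_def P_def N_def using nf by simp
    have fN: "finite N" "N \<noteq> {}" unfolding N_def using Nbr_ne[of E "snd s"] by auto
    have up: "A p \<le> V0 s" if p: "p \<in> P" for p
    proof -
      have "A p \<le> \<gamma> * measure_pmf.expectation p (\<lambda>a. V0 (a, \<nu> s))"
        unfolding A_def using fN nuN sS N_def by (intro Min_le) auto
      also have "\<dots> \<le> \<gamma> * (V0 s / \<gamma>)"
      proof -
        have "\<forall>a\<in>set_pmf p. V0 (a, \<nu> s) \<le> V0 s / \<gamma>"
        proof
          fix a assume "a \<in> set_pmf p"
          then have aN: "a \<in> NbrP E (fst s)" using p unfolding P_def by auto
          have "\<gamma> * enat_pow \<gamma> (D (a, \<nu> s)) = enat_pow \<gamma> (D (a, \<nu> s) + 1)" by (rule ep_suc[symmetric])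
          also have "\<dots> \<le> enat_pow \<gamma> (D s)" using ep_anti[of \<gamma>, OF _ _ nuP[OF sS nf aN]] g by simp
          finally have "\<gamma> * V0 (a, \<nu> s) \<le> V0 s" unfolding V0_def using inS[OF sS aN] sS by simp
          then show "V0 (a, \<nu> s) \<le> V0 s / \<gamma>" using g by (simp add: le_divide_eq mult.commute)
        qed
        then have "measure_pmf.expectation p (\<lambda>a. V0 (a, \<nu> s)) \<le> V0 s / \<gamma>"
          using bV0 by (intro pmf_exp_le_const[where B=1]) auto
        then show ?thesis using g by (simp add: le_divide_eq mult.commute)
      qed
      also have "\<dots> = V0 s" using g by simp
      finally show ?thesis .
    qed
    have p0: "return_pmf (\<mu> s) \<in> P" unfolding P_def using muN sS by simp
    have lo: "V0 s \<le> A (return_pmf (\<mu> s))"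
      unfolding A_def
    proof (rule Min.boundedI)
      show "finite ((\<lambda>b. \<gamma> * measure_pmf.expectation (return_pmf (\<mu> s)) (\<lambda>a. V0 (a, b))) ` N)" using fN by simp
      show "(\<lambda>b. \<gamma> * measure_pmf.expectation (return_pmf (\<mu> s)) (\<lambda>a. V0 (a, b))) ` N \<noteq> {}" using fN by simp
      fix x assume "x \<in> (\<lambda>b. \<gamma> * measure_pmf.expectation (return_pmf (\<mu> s)) (\<lambda>a. V0 (a, b))) ` N"
      then obtain b where b: "b \<in> N" "x = \<gamma> * V0 (\<mu> s, b)" by auto
      have "enat_pow \<gamma> (D s) \<le> enat_pow \<gamma> (D (\<mu> s, b) + 1)"
        using ep_anti[of \<gamma>, OF _ _ P1[OF sS nf]] g b N_def by simp
      also have "\<dots> = \<gamma> * enat_pow \<gamma> (D (\<mu> s, b))" by (rule ep_suc)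
      finally show "V0 s \<le> x" using b sS inS[OF sS, of "\<mu> s" b] muN unfolding V0_def by simp
    qed
    have "Sup (A ` P) = V0 s"
    proof (rule cSup_eq_maximum)
      show "V0 s \<in> A ` P" using lo up[OF p0] p0 by (metis antisym image_eqI)
      fix x assume "x \<in> A ` P" then show "x \<le> V0 s" using up by blast
    qed
    then show ?thesis using rhs by simp
  qed
  have isnv: "is_nash_value E m f \<gamma> V0"
    unfolding is_nash_value_def using shap V0_def by simp
  have "nash_value E m f \<gamma> = V0"
    unfolding nash_value_def
  proof (rule the_equality)
    show "is_nash_value E m f \<gamma> V0" by (rule isnv)
    fix V assume "is_nash_value E m f \<gamma> V"
    then show "V = V0" using nash_unique[OF g _ isnv] by blast
  qed
  then have "\<forall>s\<in>states m. nash_value E m f \<gamma> s = enat_pow \<gamma> (D s)" unfolding V0_def by simp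
  then show ?thesis using NEmn by simp
qed

end
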